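(* Let $L$ be an infinite set and consider the edged cube $\bar Q_L$. A basic sequence is convergent over $f_{\mathrm{solved}}$ if and only if it is universally convergent; consequently the set of basic sequences convergent over $f_{\mathrm{solved}}$, taken modulo $\sim$, is exactly the group $\mathrm{UC}_L=\mathrm{uc}_L/{\sim}$ under the operation induced by concatenation. In particular, let $k=\operatorname{lcm}\{\text{order of }\pi:\pi\in S_{24}\}$; if $f$ is the (legal) terminal configuration obtained by applying a basic sequence of length $\theta$ to $f_{\mathrm{solved}}$, then there is a basic sequence of length at most $\theta\cdot(k-1)$ (ordinal product) which, applied to $f$, has terminal configuration $f_{\mathrm{solved}}$.
   Context: Let $L$ be an infinite set, $-L=\{-r:r\in L\}$ a disjoint copy of $L$, and $0$ a new element; $L^\dagger=-L\cup\{0\}\cup L$ with $-(-r)=r$, $-0=0$. Adjoin $\pm\infty$ with $-(+\infty)=-\infty$ and set $\bar L^\dagger=L^\dagger\cup\{\pm\infty\}$. Points of $U=(\bar L^\dagger)^3$ have coordinates $x,y,z$. The edged cube $\bar Q_L$ is the set of cells $(p,i)$ with $p\in U$, $i\in\{x,y,z\}$, $p_i\in\{\pm\infty\}$ ($i$ marks the face of the cell). For $i\in\{x,y,z\}$, $\alpha\in\bar L^\dagger$, the quarter-turn twist $T_{i,\alpha}$ is the permutation of cells fixing every cell whose point $p$ has $p_i\ne\alpha$ and acting on the others by the rotation $T_{x,\alpha}(\alpha,y,z)=(\alpha,-z,y)$, $T_{y,\alpha}(x,\alpha,z)=(z,\alpha,-x)$, $T_{z,\alpha}(x,y,\alpha)=(-y,x,\alpha)$,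 the marked coordinate being carried along by the rotation. Basic twists are $T,T^2,T^3$ for quarter-turn twists $T$. A basic sequence is a sequence $\langle\sigma_\eta:\eta<\theta\rangle$ of basic twists of ordinal length $\theta$. A labelling is a map $f$ from cells to $X\cup\{\mathrm{NaC}\}$ for a set $X\not\ni\mathrm{NaC}$; it is legal if it never takes value NaC; a configuration is a labelling with $X$ the six colors red, white, green, orange, yellow, blue. The solved configuration $f_{\mathrm{solved}}$ colors cell $(p,i)$ red, blue, white, orange, green, yellow according as $p_i=+\infty$ with $i=x,y,z$, or $p_i=-\infty$ with $i=x,y,z$, respectively. A twist $\sigma$ acts by $(\sigma f)(c)=f(\sigma^{-1}c)$. Applying $\langle\sigma_\eta:\eta<\theta\rangle$ to $f_0$ produces $f_{\eta+1}=\sigma_\eta f_\eta$, and for limit $\lambda\le\theta$, $f_\lambda(c)$ is the eventually constant value of $f_\eta(c)$ ($\eta<\lambda$) if it exists and NaC otherwise; $f_\theta$ is the terminal labelling. The sequence is convergent over $f_0$ if $f_\theta$ is legal, and universally convergent if it is convergent over the identity labelling (each cell labelled by itself). $\vec\sigma\sim\vec\tau$ iff they give the same terminal configuration from every configuration. $\mathrm{uc}_L$ is the set of universally convergent basic sequences under concatenation ($\vec\tau\vec\sigma$ means $\vec\sigma$ then $\vec\tau$), and $\mathrm{UC}_L=\mathrm{uc}_L/{\sim}$. *)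

theory Defs
  imports Main "HOL-Combinatorics.Permutations"
begin

text \<open>Elements of the extended coordinate set: -L, 0, L, +infinity, -infinity.
  The set L itself is modelled by the type 'l (assumed infinite in the theorem).\<close>
datatype 'l coord = Neg 'l | Zero | Pos 'l | PInf | MInf

fun cneg :: "'l coord \<Rightarrow> 'l coord" where
  "cneg (Neg a) = Pos a"
| "cneg Zero = Zero"
| "cneg (Pos a) = Neg a"
| "cneg PInf = MInf"
| "cneg MInf = PInf"

datatype axis = AX | AY | AZ

type_synonym 'l point = "'l coord \<times> 'l coord \<times> 'l coord"

fun coord_of :: "axis \<Rightarrow> 'l point \<Rightarrow> 'l coord" where
  "coord_of AX (x, y, z) = x"
| "coord_of AY (x, y, z) = y"
| "coord_of AZ (x, y, z) = z"

typedef 'l cell = "{(p, i). coord_of i (p :: 'l point) \<in> {PInf, MInf}}"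
  by (rule exI[of _ "((PInf, Zero, Zero), AX)"]) simp

fun rot_raw :: "axis \<Rightarrow> 'l coord \<Rightarrow> 'l point \<times> axis \<Rightarrow> 'l point \<times> axis" where
  "rot_raw AX a ((x, y, z), m) =
     (if x = a then ((x, cneg z, y), (case m of AX \<Rightarrow> AX | AY \<Rightarrow> AZ | AZ \<Rightarrow> AY))
      else ((x, y, z), m))"
| "rot_raw AY a ((x, y, z), m) =
     (if y = a then ((z, y, cneg x), (case m of AX \<Rightarrow> AZ | AY \<Rightarrow> AY | AZ \<Rightarrow> AX))
      else ((x, y, z), m))"
| "rot_raw AZ a ((x, y, z), m) =
     (if z = a then ((cneg y, x, z), (case m of AX \<Rightarrow> AY | AY \<Rightarrow> AX | AZ \<Rightarrow> AZ))
      else ((x, y, z), m))"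

definition quarter_turn :: "axis \<Rightarrow> 'l coord \<Rightarrow> 'l cell \<Rightarrow> 'l cell" where
  "quarter_turn i a = (\<lambda>c. Abs_cell (rot_raw i a (Rep_cell c)))"

definition basic_twists :: "('l cell \<Rightarrow> 'l cell) set" where
  "basic_twists = {quarter_turn i a ^^ n | i a n. n \<in> {1, 2, 3}}"

text \<open>A labelling with values in X \<union> {NaC}: None plays the role of NaC.\<close>
type_synonym ('l, 'x) labelling = "'l cell \<Rightarrow> 'x option"

definition legal :: "('l, 'x) labelling \<Rightarrow> bool" where
  "legal f \<longleftrightarrow> (\<forall>c. f c \<noteq> None)"

datatype color = Red | White | Green | Orange | Yellow | Blue

definition solved_raw :: "'l point \<times> axis \<Rightarrow> color" where
  "solved_raw pc = (case pc of (p, i) \<Rightarrow>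
     if coord_of i p = PInf then (case i of AX \<Rightarrow> Red | AY \<Rightarrow> Blue | AZ \<Rightarrow> White)
     else (case i of AX \<Rightarrow> Orange | AY \<Rightarrow> Green | AZ \<Rightarrow> Yellow))"

definition f_solved :: "('l, color) labelling" where
  "f_solved c = Some (solved_raw (Rep_cell c))"

definition id_labelling :: "('l, 'l cell) labelling" where
  "id_labelling c = Some c"

definition act :: "('l cell \<Rightarrow> 'l cell) \<Rightarrow> ('l, 'x) labelling \<Rightarrow> ('l, 'x) labelling" where
  "act s f = (\<lambda>c. f (inv s c))"

text \<open>A sequence of ordinal length theta is given by a well-order r (non-strict,
  as in Main) whose field is the index set, together with sigma on Field r.\<close>
definition basic_seq :: "'i rel \<Rightarrow> ('i \<Rightarrow> 'l cell \<Rightarrow> 'l cell) \<Rightarrow> bool" where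
  "basic_seq r \<sigma> \<longleftrightarrow> Well_order r \<and> (\<forall>\<eta>\<in>Field r. \<sigma> \<eta> \<in> basic_twists)"

text \<open>For S with a largest element this is just the value at that element.\<close>
definition ev_lim :: "'i rel \<Rightarrow> 'i set \<Rightarrow> ('i \<Rightarrow> ('l, 'x) labelling)
     \<Rightarrow> ('l, 'x) labelling \<Rightarrow> ('l, 'x) labelling" where
  "ev_lim r S G d = (\<lambda>c.
     if S = {} then d c
     else if (\<exists>v. \<exists>\<zeta>0\<in>S. \<forall>\<zeta>\<in>S. (\<zeta>0, \<zeta>) \<in> r \<longrightarrow> G \<zeta> c = v)
     then (THE v. \<exists>\<zeta>0\<in>S. \<forall>\<zeta>\<in>S. (\<zeta>0, \<zeta>) \<in> r \<longrightarrow> G \<zeta> c = v)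
     else None)"

text \<open>F eta is the labelling f_eta just before sigma_eta is applied; so
  act (sigma zeta) (F zeta) is f_{zeta+1}.\<close>
definition is_run :: "'i rel \<Rightarrow> ('i \<Rightarrow> 'l cell \<Rightarrow> 'l cell) \<Rightarrow> ('l, 'x) labelling
     \<Rightarrow> ('i \<Rightarrow> ('l, 'x) labelling) \<Rightarrow> bool" where
  "is_run r \<sigma> f0 F \<longleftrightarrow>
     (\<forall>\<eta>\<in>Field r. F \<eta> = ev_lim r (underS r \<eta>) (\<lambda>\<zeta>. act (\<sigma> \<zeta>) (F \<zeta>)) f0)"

definition terminal :: "'i rel \<Rightarrow> ('i \<Rightarrow> 'l cell \<Rightarrow> 'l cell) \<Rightarrow> ('l, 'x) labelling
     \<Rightarrow> ('l, 'x) labelling" where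
  "terminal r \<sigma> f0 =
     (THE T. \<exists>F. is_run r \<sigma> f0 F \<and> T = ev_lim r (Field r) (\<lambda>\<zeta>. act (\<sigma> \<zeta>) (F \<zeta>)) f0)"

definition convergent_over :: "'i rel \<Rightarrow> ('i \<Rightarrow> 'l cell \<Rightarrow> 'l cell) \<Rightarrow> ('l, 'x) labelling \<Rightarrow> bool" where
  "convergent_over r \<sigma> f0 \<longleftrightarrow> legal (terminal r \<sigma> f0)"

definition universally_convergent :: "'i rel \<Rightarrow> ('i \<Rightarrow> 'l cell \<Rightarrow> 'l cell) \<Rightarrow> bool" where
  "universally_convergent r \<sigma> \<longleftrightarrow> convergent_over r \<sigma> id_labelling"

text \<open>The ordinal product theta * m for a natural number m: the order type of
  {0..<m} x Field r ordered lexicographically with the natural-number component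
  most significant (theta + theta + ... , m times).\<close>
definition ord_mult_nat :: "'i rel \<Rightarrow> nat \<Rightarrow> ('i \<times> nat) rel" where
  "ord_mult_nat r m = {((a, i), (b, j)). a \<in> Field r \<and> b \<in> Field r \<and> i < m \<and> j < m \<and>
                          (i < j \<or> (i = j \<and> (a, b) \<in> r))}"

definition perm_order :: "(nat \<Rightarrow> nat) \<Rightarrow> nat" where
  "perm_order \<pi> = (LEAST n. 0 < n \<and> \<pi> ^^ n = id)"

definition k24 :: nat where
  "k24 = Lcm {perm_order \<pi> | \<pi>. \<pi> permutes {1..24::nat}}"

end

theory Submission
  imports Defs "HOL-Combinatorics.Cycles"
begin

lemma cneg_cneg[simp]: "cneg (cneg v) = v" by (cases v) auto
lemma cneg_PInf_iff[simp]: "cneg v = PInf \<longleftrightarrow> v = MInf" by (cases v) auto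
lemma cneg_MInf_iff[simp]: "cneg v = MInf \<longleftrightarrow> v = PInf" by (cases v) auto

definition iscell :: "'l point \<times> axis \<Rightarrow> bool" where
  "iscell c \<longleftrightarrow> coord_of (snd c) (fst c) \<in> {PInf, MInf}"

lemma Rep_cell_iscell: "iscell (Rep_cell c)"
  using Rep_cell[of c] by (auto simp: iscell_def split: prod.splits)

lemma Rep_Abs_cell: "iscell c \<Longrightarrow> Rep_cell (Abs_cell c) = c"
  by (rule Abs_cell_inverse) (auto simp: iscell_def split: prod.splits)

definition gen :: "axis \<Rightarrow> 'l point \<times> axis \<Rightarrow> 'l point \<times> axis" where
  "gen j c = rot_raw j (coord_of j (fst c)) c"

lemma rot_raw_gen: "rot_raw j a c = (if coord_of j (fst c) = a then gen j c else c)"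
  by (cases j; cases c; auto simp: gen_def)

lemma gen_iscell: "iscell c \<Longrightarrow> iscell (gen j c)"
  by (cases j; cases c; auto simp: gen_def iscell_def split: axis.splits)

lemma coord_gen[simp]: "coord_of j (fst (gen j c)) = coord_of j (fst c)"
  by (cases j; cases c; auto simp: gen_def)

lemma gen4: "gen j (gen j (gen j (gen j c))) = c"
  by (cases j; cases c; auto simp: gen_def split: axis.splits)

lemma rot_raw_iscell: "iscell c \<Longrightarrow> iscell (rot_raw j a c)"
  by (simp add: rot_raw_gen gen_iscell)

lemma Rep_qt: "Rep_cell (quarter_turn j a c) = rot_raw j a (Rep_cell c)"
  unfolding quarter_turn_def by (rule Rep_Abs_cell[OF rot_raw_iscell[OF Rep_cell_iscell]])

lemma Rep_qt_pow: "Rep_cell ((quarter_turn j a ^^ n) c) = (rot_raw j a ^^ n) (Rep_cell c)"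
  by (induction n) (auto simp: Rep_qt)

lemma rot_raw4: "(rot_raw j a ^^ 4) c = c"
  by (simp add: numeral_eq_Suc rot_raw_gen gen4)

lemma qt4: "(quarter_turn j a ^^ 4) = id"
proof
  fix c show "(quarter_turn j a ^^ 4) c = id c"
    by (metis Rep_cell_inject Rep_qt_pow rot_raw4 id_apply)
qed

section \<open>Rotations\<close>

fun third :: "axis \<Rightarrow> axis \<Rightarrow> axis" where
  "third AX AY = AZ" | "third AY AX = AZ" | "third AX AZ = AY" | "third AZ AX = AY"
| "third AY AZ = AX" | "third AZ AY = AX" | "third a b = a"

fun cyc :: "axis \<Rightarrow> axis \<Rightarrow> bool" where
  "cyc AX AY = True" | "cyc AY AZ = True" | "cyc AZ AX = True" | "cyc a b = False"

definition sg :: "bool \<Rightarrow> 'l coord \<Rightarrow> 'l coord" where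
  "sg s v = (if s then v else cneg v)"

type_synonym spec = "axis \<times> bool \<times> axis \<times> bool"

definition sgn3 :: "spec \<Rightarrow> bool" where
  "sgn3 R = (case R of (a, sa, b, sb) \<Rightarrow> ((sa = sb) = cyc a b))"

definition mkpt :: "axis \<Rightarrow> 'l coord \<Rightarrow> axis \<Rightarrow> 'l coord \<Rightarrow> 'l coord \<Rightarrow> 'l point" where
  "mkpt a va b vb vc = (let sel = (\<lambda>k. if k = a then va else if k = b then vb else vc)
     in (sel AX, sel AY, sel AZ))"

fun apply_rot :: "spec \<Rightarrow> 'l point \<times> axis \<Rightarrow> 'l point \<times> axis" where
  "apply_rot (a, sa, b, sb) ((x, y, z), m) =
     (mkpt a (sg sa x) b (sg sb y) (sg (sgn3 (a, sa, b, sb)) z),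
      (case m of AX \<Rightarrow> a | AY \<Rightarrow> b | AZ \<Rightarrow> third a b))"

definition Rot :: "spec set" where "Rot = {(a, sa, b, sb). a \<noteq> b}"

fun rcomp :: "spec \<Rightarrow> axis \<Rightarrow> spec" where
  "rcomp (a, sa, b, sb) AX = (a, sa, third a b, sgn3 (a, sa, b, sb))"
| "rcomp (a, sa, b, sb) AY = (third a b, \<not> sgn3 (a, sa, b, sb), b, sb)"
| "rcomp (a, sa, b, sb) AZ = (b, sb, a, \<not> sa)"

lemma third_neq: "a \<noteq> b \<Longrightarrow> third a b \<noteq> a \<and> third a b \<noteq> b"
  by (cases a; cases b) auto

lemma rcomp_Rot: "R \<in> Rot \<Longrightarrow> rcomp R j \<in> Rot"
  by (cases R; cases j) (auto simp: Rot_def dest: third_neq)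

lemma rcomp_apply: "R \<in> Rot \<Longrightarrow> apply_rot R (gen j ((x,y,z),m)) = apply_rot (rcomp R j) ((x,y,z),m)"
  apply (cases R)
  apply (rename_tac a sa b sb)
  apply (case_tac a; case_tac b; case_tac j; case_tac m; simp add: Rot_def)
  apply (simp_all add: gen_def mkpt_def sg_def sgn3_def)
  done

fun nx :: "axis \<Rightarrow> axis" where "nx AX = AY" | "nx AY = AZ" | "nx AZ = AX"

definition Ap :: "axis \<Rightarrow> 'l coord \<Rightarrow> 'l coord \<Rightarrow> 'l point" where
  "Ap j a s = ((if j = AX then a else s), (if j = AY then a else s), (if j = AZ then a else s))"

lemma key_colors:
  assumes "R1 \<in> Rot" "R2 \<in> Rot"
    and "solved_raw (apply_rot R1 (Ap j a PInf, nx j)) = solved_raw (apply_rot R2 (Ap j a MInf, nx j))"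
    and "solved_raw (apply_rot R1 (Ap j a PInf, nx (nx j))) = solved_raw (apply_rot R2 (Ap j a MInf, nx (nx j)))"
  shows "apply_rot R1 (Ap j a PInf, nx j) = apply_rot R2 (Ap j a MInf, nx j)"
  using assms
  apply (cases R1; cases R2)
  apply (rename_tac a1 sa1 b1 sb1 a2 sa2 b2 sb2)
  apply (case_tac j; case_tac a1; case_tac b1; case_tac a2; case_tac b2; simp add: Rot_def)
  apply (auto simp: Ap_def mkpt_def sg_def sgn3_def solved_raw_def split: if_splits)
  done

definition evt :: "'i rel \<Rightarrow> 'i set \<Rightarrow> ('i \<Rightarrow> bool) \<Rightarrow> bool" where
  "evt r S P \<longleftrightarrow> (\<exists>z0\<in>S. \<forall>z\<in>S. (z0, z) \<in> r \<longrightarrow> P z)"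

lemma ev_lim_alt: "ev_lim r S G d c = (if S = {} then d c else if \<exists>v. evt r S (\<lambda>z. G z c = v)
   then (THE v. evt r S (\<lambda>z. G z c = v)) else None)"
  unfolding ev_lim_def evt_def by (rule refl)

lemma ev_lim_empty[simp]: "ev_lim r {} G d = d"
  by (simp add: ev_lim_def)

lemma ev_lim_cong:
  assumes "\<And>z. z \<in> S \<Longrightarrow> G z = G' z"
  shows "ev_lim r S G d = ev_lim r S G' d"
proof
  fix c
  have "\<And>v. evt r S (\<lambda>z. G z c = v) = evt r S (\<lambda>z. G' z c = v)"
    using assms unfolding evt_def by auto
  then show "ev_lim r S G d c = ev_lim r S G' d c" by (simp add: ev_lim_alt)
qed

context
  fixes r :: "'i rel"
  assumes wo: "Well_order r"
begin

lemma wo_trans: "(a, b) \<in> r \<Longrightarrow> (b, c) \<in> r \<Longrightarrow> (a, c) \<in> r"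
  using wo unfolding well_order_on_def linear_order_on_def partial_order_on_def preorder_on_def
  by (meson transE)

lemma wo_antisym: "(a, b) \<in> r \<Longrightarrow> (b, a) \<in> r \<Longrightarrow> a = b"
  using wo unfolding well_order_on_def linear_order_on_def partial_order_on_def preorder_on_def
  by (meson antisymD)

lemma wo_refl: "a \<in> Field r \<Longrightarrow> (a, a) \<in> r"
  using wo unfolding well_order_on_def linear_order_on_def partial_order_on_def preorder_on_def
  by (meson refl_onD)

lemma wo_total: "a \<in> Field r \<Longrightarrow> b \<in> Field r \<Longrightarrow> (a, b) \<in> r \<or> (b, a) \<in> r"
  using wo wo_refl unfolding well_order_on_def linear_order_on_def total_on_def
  by metis

lemma wo_wf: "wf (r - Id)"
  using wo unfolding well_order_on_def by blast

lemma in_Field1: "(a, b) \<in> r \<Longrightarrow> a \<in> Field r" by (auto simp: Field_def)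
lemma in_Field2: "(a, b) \<in> r \<Longrightarrow> b \<in> Field r" by (auto simp: Field_def)

lemma evt_conj:
  assumes "S \<subseteq> Field r" "evt r S P" "evt r S Q"
  shows "evt r S (\<lambda>z. P z \<and> Q z)"
proof -
  obtain z1 where z1: "z1 \<in> S" "\<forall>z\<in>S. (z1, z) \<in> r \<longrightarrow> P z" using assms(2) evt_def by metis
  obtain z2 where z2: "z2 \<in> S" "\<forall>z\<in>S. (z2, z) \<in> r \<longrightarrow> Q z" using assms(3) evt_def by metis
  have "(z1, z2) \<in> r \<or> (z2, z1) \<in> r" using wo_total z1 z2 assms(1) by blast
  then show ?thesis
  proof
    assume "(z1, z2) \<in> r"
    then show ?thesis unfolding evt_def using z1 z2 wo_trans by blast
  next
    assume "(z2, z1) \<in> r"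
    then show ?thesis unfolding evt_def using z1 z2 wo_trans by blast
  qed
qed

lemma evt_mono: "evt r S P \<Longrightarrow> (\<And>z. z \<in> S \<Longrightarrow> P z \<Longrightarrow> Q z) \<Longrightarrow> evt r S Q"
  unfolding evt_def by blast

lemma evt_ge: "z \<in> S \<Longrightarrow> evt r S (\<lambda>z'. (z, z') \<in> r)"
  unfolding evt_def by blast

lemma evt_true: "S \<noteq> {} \<Longrightarrow> evt r S (\<lambda>z. True)"
  unfolding evt_def by blast

lemma evt_ball:
  assumes "finite C" "S \<subseteq> Field r" "S \<noteq> {}" "\<forall>c\<in>C. evt r S (P c)"
  shows "evt r S (\<lambda>z. \<forall>c\<in>C. P c z)"
  using assms(1,4)
proof (induction C rule: finite_induct)
  case empty then show ?case using evt_true[OF assms(3)] by simp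
next
  case (insert x F)
  have "evt r S (\<lambda>z. P x z \<and> (\<forall>c\<in>F. P c z))"
    using evt_conj[OF assms(2)] insert by simp
  then show ?case by simp
qed

lemma evt_witness: "S \<subseteq> Field r \<Longrightarrow> evt r S P \<Longrightarrow> \<exists>z0\<in>S. P z0 \<and> (\<forall>z\<in>S. (z0, z) \<in> r \<longrightarrow> P z)"
  unfolding evt_def using wo_refl by blast

lemma evt_unique:
  assumes "S \<subseteq> Field r" "evt r S (\<lambda>z. G z = v)" "evt r S (\<lambda>z. G z = w)"
  shows "v = w"
proof -
  have "evt r S (\<lambda>z. G z = v \<and> G z = w)" using evt_conj assms by blast
  then show ?thesis using evt_witness assms(1) by blast
qed

lemma ev_lim_evt:
  assumes "S \<subseteq> Field r" "evt r S (\<lambda>z. G z c = v)"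
  shows "ev_lim r S G d c = v"
proof -
  have ne: "S \<noteq> {}" using assms(2) unfolding evt_def by blast
  have "(THE v. evt r S (\<lambda>z. G z c = v)) = v"
    apply (rule the_equality[of "\<lambda>v. evt r S (\<lambda>z. G z c = v)", OF assms(2)])
    using evt_unique[OF assms(1) _ assms(2)] by blast
  then show ?thesis using ne assms by (auto simp: ev_lim_alt)
qed

lemma ev_lim_evt2:
  assumes "S \<subseteq> Field r" "ev_lim r S G d c \<noteq> None" "S \<noteq> {}"
  shows "evt r S (\<lambda>z. G z c = ev_lim r S G d c)"
proof -
  have "\<exists>v. evt r S (\<lambda>z. G z c = v)"
    using assms(2,3) by (auto simp: ev_lim_alt split: if_splits)
  then obtain v where v: "evt r S (\<lambda>z. G z c = v)" by blast
  then show ?thesis using ev_lim_evt[of S G c v d] assms(1) v by simp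
qed

lemma underS_sub: "underS r a \<subseteq> Field r"
  by (auto simp: underS_def Field_def)

lemma underS_down: "z \<in> underS r a \<Longrightarrow> (y, z) \<in> r \<Longrightarrow> y \<in> underS r a"
  unfolding underS_def using wo_trans wo_antisym by blast

end

lemma axis_UNIV: "(UNIV :: axis set) = {AX, AY, AZ}"
  using axis.exhaust by blast

lemma Rot_list: "Rot = set [(AX, True, AY, True), (AX, True, AY, False), (AX, False, AY, True), (AX, False, AY, False), (AX, True, AZ, True), (AX, True, AZ, False), (AX, False, AZ, True), (AX, False, AZ, False), (AY, True, AX, True), (AY, True, AX, False), (AY, False, AX, True), (AY, False, AX, False), (AY, True, AZ, True), (AY, True, AZ, False), (AY, False, AZ, True), (AY, False, AZ, False), (AZ, True, AX, True), (AZ, True, AX, False), (AZ, False, AX, True), (AZ, False, AX, False), (AZ, True, AY, True), (AZ, True, AY, False), (AZ, False, AY, True), (AZ, False, AY, False)]"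
proof (rule set_eqI)
  fix x :: spec
  obtain a sa b sb where x: "x = (a, sa, b, sb)" by (cases x)
  show "x \<in> Rot \<longleftrightarrow> x \<in> set [(AX, True, AY, True), (AX, True, AY, False), (AX, False, AY, True), (AX, False, AY, False), (AX, True, AZ, True), (AX, True, AZ, False), (AX, False, AZ, True), (AX, False, AZ, False), (AY, True, AX, True), (AY, True, AX, False), (AY, False, AX, True), (AY, False, AX, False), (AY, True, AZ, True), (AY, True, AZ, False), (AY, False, AZ, True), (AY, False, AZ, False), (AZ, True, AX, True), (AZ, True, AX, False), (AZ, False, AX, True), (AZ, False, AX, False), (AZ, True, AY, True), (AZ, True, AY, False), (AZ, False, AY, True), (AZ, False, AY, False)]"
    unfolding x Rot_def by (cases a; cases b; cases sa; cases sb) simp_all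
qed

lemma Rot_finite: "finite Rot" by (simp add: Rot_list)
lemma Rot_card: "card Rot \<le> 24"
  unfolding Rot_list by (rule order.trans[OF card_length]) simp

definition idspec :: spec where "idspec = (AX, True, AY, True)"

lemma idspec_Rot: "idspec \<in> Rot" by (simp add: idspec_def Rot_def)

lemma apply_idspec: "apply_rot idspec c = c"
  by (cases c) (auto simp: idspec_def mkpt_def sg_def sgn3_def split: axis.splits)

lemma rcomp_apply': "R \<in> Rot \<Longrightarrow> apply_rot R (gen j c) = apply_rot (rcomp R j) c"
  by (cases c) (auto simp: rcomp_apply)

lemma cneg_inj[simp]: "cneg a = cneg b \<longleftrightarrow> a = b"
  by (metis cneg_cneg)

lemma apply_rot_inj: "R \<in> Rot \<Longrightarrow> apply_rot R c = apply_rot R d \<Longrightarrow> c = d"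
  apply (cases R; cases c; cases d)
  apply (rename_tac a sa b sb p m p' m')
  apply (case_tac p; case_tac p')
  apply (case_tac a; case_tac b; simp add: Rot_def)
  apply (auto simp: mkpt_def sg_def split: axis.splits if_splits)
  done

lemma qt_pow_add: "(quarter_turn j a ^^ m) ((quarter_turn j a ^^ n) c) = (quarter_turn j a ^^ (m + n)) c"
  by (simp add: funpow_add)

lemma qt_pow_mod4: "(quarter_turn j a ^^ n) = (quarter_turn j a ^^ (n mod 4))"
proof -
  have "quarter_turn j a ^^ n = (quarter_turn j a ^^ 4) ^^ (n div 4) \<circ> quarter_turn j a ^^ (n mod 4)"
    by (metis funpow_add funpow_mult mult.commute div_mult_mod_eq)
  then show ?thesis by (simp add: qt4)
qed

lemma qt_pow_inv:
  assumes "n \<le> 4"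
  shows "inv (quarter_turn j a ^^ n) = quarter_turn j a ^^ (4 - n)"
proof (rule inv_unique_comp)
  show "quarter_turn j a ^^ n \<circ> quarter_turn j a ^^ (4 - n) = id"
    using assms by (simp add: funpow_add[symmetric] qt4)
  show "quarter_turn j a ^^ (4 - n) \<circ> quarter_turn j a ^^ n = id"
    using assms by (simp add: funpow_add[symmetric] qt4)
qed

lemma qt_bij: "bij (quarter_turn j a)"
proof (rule o_bij[of "quarter_turn j a ^^ 3"])
  have "quarter_turn j a ^^ (3 + 1) = quarter_turn j a ^^ 3 \<circ> quarter_turn j a ^^ 1" by (rule funpow_add)
  then show "(quarter_turn j a ^^ 3) \<circ> quarter_turn j a = id" by (simp add: qt4)
  have "quarter_turn j a ^^ (1 + 3) = quarter_turn j a ^^ 1 \<circ> quarter_turn j a ^^ 3" by (rule funpow_add)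
  then show "quarter_turn j a \<circ> (quarter_turn j a ^^ 3) = id" by (simp add: qt4)
qed

lemma bt_form: "s \<in> basic_twists \<Longrightarrow> \<exists>j a n. s = quarter_turn j a ^^ n \<and> n \<in> {1, 2, 3}"
  unfolding basic_twists_def by blast

lemma bt_bij: "s \<in> basic_twists \<Longrightarrow> bij s"
proof -
  assume "s \<in> basic_twists"
  then obtain j a n where "s = quarter_turn j a ^^ n" using bt_form by blast
  then show "bij s" using bij_fn[OF qt_bij[of j a], of n] by simp
qed

lemma bt_inv: "s \<in> basic_twists \<Longrightarrow> \<exists>j a m. inv s = quarter_turn j a ^^ m"
proof -
  assume "s \<in> basic_twists"
  then obtain j a n where "s = quarter_turn j a ^^ n" "n \<in> {1,2,3}" using bt_form by blast
  then have "inv s = quarter_turn j a ^^ (4 - n)" using qt_pow_inv[of n j a] by auto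
  then show ?thesis by blast
qed

lemma act_apply: "act s f c = f (inv s c)" by (simp add: act_def)

section \<open>Classes\<close>

definition gq :: "axis \<Rightarrow> 'l cell \<Rightarrow> 'l cell" where
  "gq j d = Abs_cell (gen j (Rep_cell d))"

lemma Rep_gq: "Rep_cell (gq j d) = gen j (Rep_cell d)"
  unfolding gq_def by (rule Rep_Abs_cell[OF gen_iscell[OF Rep_cell_iscell]])

lemma gq4: "gq j (gq j (gq j (gq j d))) = d"
  by (metis Rep_cell_inject Rep_gq gen4)

inductive cls :: "'l cell \<Rightarrow> 'l cell \<Rightarrow> bool" for c where
  cls_refl: "cls c c"
| cls_step: "cls c d \<Longrightarrow> cls c (gq j d)"

lemma cls_trans: "cls d e \<Longrightarrow> cls c d \<Longrightarrow> cls c e"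
  by (induction rule: cls.induct) (auto intro: cls_step)

lemma cls_gq_back: "cls (gq j d) d"
proof -
  have "cls (gq j d) (gq j (gq j (gq j (gq j d))))"
    by (intro cls_step cls_refl)
  then show ?thesis by (simp add: gq4)
qed

lemma cls_sym: "cls c d \<Longrightarrow> cls d c"
proof (induction rule: cls.induct)
  case cls_refl then show ?case by (rule cls.cls_refl)
next
  case (cls_step d j) then show ?case using cls_trans cls_gq_back by blast
qed

lemma cls_qt: "cls c (quarter_turn j a c)"
proof -
  have "Rep_cell (quarter_turn j a c) = (if coord_of j (fst (Rep_cell c)) = a then Rep_cell (gq j c) else Rep_cell c)"
    by (simp add: Rep_qt rot_raw_gen Rep_gq)
  then have "quarter_turn j a c = gq j c \<or> quarter_turn j a c = c"
    by (metis Rep_cell_inject)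
  then show ?thesis by (elim disjE) (auto intro: cls.intros)
qed

lemma cls_qtpow: "cls c ((quarter_turn j a ^^ n) c)"
proof (induction n)
  case 0 then show ?case by (simp add: cls_refl)
next
  case (Suc n) then show ?case using cls_trans[OF cls_qt Suc.IH] by simp
qed

lemma cls_bt: "s \<in> basic_twists \<Longrightarrow> cls c (s c)"
  using bt_form cls_qtpow by metis

lemma cls_bt_inv: "s \<in> basic_twists \<Longrightarrow> cls c (inv s c)"
proof -
  assume s: "s \<in> basic_twists"
  have "cls (inv s c) (s (inv s c))" by (rule cls_bt[OF s])
  moreover have "s (inv s c) = c" using bt_bij[OF s] by (simp add: bij_is_surj surj_f_inv_f)
  ultimately show ?thesis using cls_sym by simp
qed

lemma cls_rot: "cls c d \<Longrightarrow> \<exists>R\<in>Rot. apply_rot R (Rep_cell d) = Rep_cell c"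
proof (induction rule: cls.induct)
  case cls_refl then show ?case using idspec_Rot apply_idspec by blast
next
  case (cls_step d j)
  then obtain R where R: "R \<in> Rot" "apply_rot R (Rep_cell d) = Rep_cell c" by blast
  define R3 where "R3 = rcomp (rcomp (rcomp R j) j) j"
  have R3: "R3 \<in> Rot" unfolding R3_def using R(1) rcomp_Rot by blast
  have "apply_rot R3 (gen j (Rep_cell d)) = apply_rot R (gen j (gen j (gen j (gen j (Rep_cell d)))))"
    unfolding R3_def using R(1) rcomp_Rot by (simp add: rcomp_apply')
  then have "apply_rot R3 (Rep_cell (gq j d)) = Rep_cell c" by (simp add: gen4 Rep_gq R(2))
  then show ?case using R3 by blast
qed

lemma cls_finite_card: "finite {d. cls c d} \<and> card {d. cls c d} \<le> 24"
proof -
  define K where "K = {d. cls c d}"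
  define \<phi> where "\<phi> d = (SOME R. R \<in> Rot \<and> apply_rot R (Rep_cell d) = Rep_cell c)" for d
  have phi: "\<phi> d \<in> Rot \<and> apply_rot (\<phi> d) (Rep_cell d) = Rep_cell c" if "d \<in> K" for d
  proof -
    have "\<exists>R. R \<in> Rot \<and> apply_rot R (Rep_cell d) = Rep_cell c" using cls_rot[of c d] that K_def by auto
    then show ?thesis unfolding \<phi>_def by (rule someI_ex)
  qed
  have inj: "inj_on \<phi> K"
  proof (rule inj_onI)
    fix d1 d2 assume "d1 \<in> K" "d2 \<in> K" "\<phi> d1 = \<phi> d2"
    then have "Rep_cell d1 = Rep_cell d2" using phi apply_rot_inj by metis
    then show "d1 = d2" using Rep_cell_inject by blast
  qed
  have sub: "\<phi> ` K \<subseteq> Rot" using phi by blast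
  have fin: "finite K" using finite_imageD[OF finite_subset[OF sub Rot_finite] inj] .
  have "card K = card (\<phi> ` K)" using card_image[OF inj] by simp
  also have "\<dots> \<le> card Rot" by (rule card_mono[OF Rot_finite sub])
  finally show ?thesis using fin Rot_card K_def by simp
qed

context
  fixes r :: "'i rel" and \<sigma> :: "'i \<Rightarrow> 'l cell \<Rightarrow> 'l cell"
  assumes wo: "Well_order r" and bs: "\<forall>\<eta>\<in>Field r. \<sigma> \<eta> \<in> basic_twists"
begin

definition runF :: "('l, 'x) labelling \<Rightarrow> 'i \<Rightarrow> ('l, 'x) labelling" where
  "runF g = wfrec (r - Id) (\<lambda>F \<eta>. ev_lim r (underS r \<eta>) (\<lambda>\<zeta>. act (\<sigma> \<zeta>) (F \<zeta>)) g)"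

definition Gs :: "('l, 'x) labelling \<Rightarrow> 'i \<Rightarrow> ('l, 'x) labelling" where
  "Gs g \<zeta> = act (\<sigma> \<zeta>) (runF g \<zeta>)"

lemma runF_eq: "runF g \<eta> = ev_lim r (underS r \<eta>) (Gs g) g"
  unfolding Gs_def runF_def
  apply (subst wfrec[OF wo_wf[OF wo]])
  apply (rule ev_lim_cong)
  apply (subst cut_apply)
   apply (auto simp: underS_def)
  done

lemma is_run_runF: "is_run r \<sigma> g (runF g)"
  unfolding is_run_def using runF_eq unfolding Gs_def by blast

lemma run_unique:
  assumes "is_run r \<sigma> g F"
  shows "\<eta> \<in> Field r \<Longrightarrow> F \<eta> = runF g \<eta>"
proof (induction \<eta> rule: wf_induct[OF wo_wf[OF wo]])
  case (1 \<eta>)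
  have "F \<eta> = ev_lim r (underS r \<eta>) (\<lambda>\<zeta>. act (\<sigma> \<zeta>) (F \<zeta>)) g"
    using assms 1(2) unfolding is_run_def by blast
  also have "\<dots> = ev_lim r (underS r \<eta>) (Gs g) g"
  proof (rule ev_lim_cong)
    fix z assume z: "z \<in> underS r \<eta>"
    then have "(z, \<eta>) \<in> r - Id" "z \<in> Field r" by (auto simp: underS_def Field_def)
    then show "act (\<sigma> z) (F z) = Gs g z" using 1(1) by (simp add: Gs_def)
  qed
  finally show ?case by (simp add: runF_eq)
qed

lemma terminal_run: "is_run r \<sigma> g F \<Longrightarrow> terminal r \<sigma> g = ev_lim r (Field r) (\<lambda>\<zeta>. act (\<sigma> \<zeta>) (F \<zeta>)) g"
proof -
  assume F: "is_run r \<sigma> g F"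
  have eq: "ev_lim r (Field r) (\<lambda>\<zeta>. act (\<sigma> \<zeta>) (F' \<zeta>)) g = ev_lim r (Field r) (Gs g) g"
    if "is_run r \<sigma> g F'" for F'
  proof (rule ev_lim_cong)
    fix z assume "z \<in> Field r"
    then have "F' z = runF g z" by (rule run_unique[OF that])
    then show "act (\<sigma> z) (F' z) = Gs g z" by (simp add: Gs_def)
  qed
  show ?thesis unfolding terminal_def
  proof (rule the_equality)
    show "\<exists>F'. is_run r \<sigma> g F' \<and> ev_lim r (Field r) (\<lambda>\<zeta>. act (\<sigma> \<zeta>) (F \<zeta>)) g = ev_lim r (Field r) (\<lambda>\<zeta>. act (\<sigma> \<zeta>) (F' \<zeta>)) g"
      using F by blast
    fix T assume "\<exists>F'. is_run r \<sigma> g F' \<and> T = ev_lim r (Field r) (\<lambda>\<zeta>. act (\<sigma> \<zeta>) (F' \<zeta>)) g"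
    then obtain F' where F': "is_run r \<sigma> g F'" "T = ev_lim r (Field r) (\<lambda>\<zeta>. act (\<sigma> \<zeta>) (F' \<zeta>)) g" by blast
    show "T = ev_lim r (Field r) (\<lambda>\<zeta>. act (\<sigma> \<zeta>) (F \<zeta>)) g"
      using F'(2) eq[OF F'(1)] eq[OF F] by simp
  qed
qed

lemma terminal_eq: "terminal r \<sigma> g = ev_lim r (Field r) (Gs g) g"
  using terminal_run[OF is_run_runF[of g]] unfolding Gs_def by simp

lemma Gs_apply: "Gs g \<zeta> c = runF g \<zeta> (inv (\<sigma> \<zeta>) c)"
  by (simp add: Gs_def act_apply)

lemma sig_bij: "\<zeta> \<in> Field r \<Longrightarrow> bij (\<sigma> \<zeta>)"
  using bs bt_bij by blast

subsection \<open>Persistence of NaC\<close>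

lemma persist_lim:
  assumes S: "S \<subseteq> Field r" and z: "\<zeta> \<in> S"
    and H: "\<forall>\<xi>\<in>S. (\<zeta>, \<xi>) \<in> r \<longrightarrow> (\<exists>d. cls c d \<and> Gs g \<xi> d = None)"
  shows "\<exists>d. cls c d \<and> ev_lim r S (Gs g) g d = None"
proof (rule ccontr)
  assume "\<not> ?thesis"
  then have nn: "\<forall>d\<in>{d. cls c d}. ev_lim r S (Gs g) g d \<noteq> None" by auto
  have ne: "S \<noteq> {}" using z by blast
  have "\<forall>d\<in>{d. cls c d}. evt r S (\<lambda>z. Gs g z d = ev_lim r S (Gs g) g d)"
    using nn ev_lim_evt2[OF wo S _ ne, of "Gs g" g] by blast
  then have "evt r S (\<lambda>z. \<forall>d\<in>{d. cls c d}. Gs g z d = ev_lim r S (Gs g) g d)"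
    using evt_ball[OF wo conjunct1[OF cls_finite_card[of c]] S ne, of "\<lambda>d z. Gs g z d = ev_lim r S (Gs g) g d"] by blast
  then have "evt r S (\<lambda>z. (\<forall>d\<in>{d. cls c d}. Gs g z d = ev_lim r S (Gs g) g d) \<and> (\<zeta>, z) \<in> r)"
    using evt_conj[OF wo S _ evt_ge[OF wo z]] by blast
  then obtain \<xi> where xi: "\<xi> \<in> S" "(\<zeta>, \<xi>) \<in> r" "\<forall>d\<in>{d. cls c d}. Gs g \<xi> d = ev_lim r S (Gs g) g d"
    using evt_witness[OF wo S] by blast
  obtain d where d: "cls c d" "Gs g \<xi> d = None" using H xi(1,2) by blast
  have "ev_lim r S (Gs g) g d = None" using xi(3) d by simp
  then show False using nn d(1) by simp
qed

lemma persist: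
  assumes z: "\<zeta> \<in> Field r" and N: "runF g \<zeta> c = None"
  shows "\<zeta>' \<in> Field r \<Longrightarrow> (\<zeta>, \<zeta>') \<in> r \<Longrightarrow> \<exists>d. cls c d \<and> Gs g \<zeta>' d = None"
proof (induction \<zeta>' rule: wf_induct[OF wo_wf[OF wo]])
  case (1 \<zeta>')
  show ?case
  proof (cases "\<zeta>' = \<zeta>")
    case True
    have "Gs g \<zeta> (\<sigma> \<zeta> c) = None"
      using N sig_bij[OF z] by (simp add: Gs_apply bij_is_inj)
    then show ?thesis using True cls_bt bs z by blast
  next
    case False
    have "\<exists>d. cls c d \<and> ev_lim r (underS r \<zeta>') (Gs g) g d = None"
    proof (rule persist_lim[OF underS_sub[OF wo]])
      show "\<zeta> \<in> underS r \<zeta>'" using False 1(3) by (auto simp: underS_def)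
      show "\<forall>\<xi>\<in>underS r \<zeta>'. (\<zeta>, \<xi>) \<in> r \<longrightarrow> (\<exists>d. cls c d \<and> Gs g \<xi> d = None)"
        using 1(1) by (auto simp: underS_def Field_def)
    qed
    then obtain d where d: "cls c d" "runF g \<zeta>' d = None" by (auto simp: runF_eq[of g \<zeta>'])
    have "Gs g \<zeta>' (\<sigma> \<zeta>' d) = None"
      using d sig_bij[OF 1(2)] by (simp add: Gs_apply bij_is_inj)
    moreover have "cls c (\<sigma> \<zeta>' d)" using cls_trans[OF cls_bt d(1)] bs 1(2) by blast
    ultimately show ?thesis by blast
  qed
qed

lemma legal_all: "legal (terminal r \<sigma> g) \<Longrightarrow> \<zeta> \<in> Field r \<Longrightarrow> legal (runF g \<zeta>)"
proof (rule ccontr)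
  assume L: "legal (terminal r \<sigma> g)" and z: "\<zeta> \<in> Field r" and nl: "\<not> legal (runF g \<zeta>)"
  then obtain c where c: "runF g \<zeta> c = None" by (auto simp: legal_def)
  have "\<exists>d. cls c d \<and> ev_lim r (Field r) (Gs g) g d = None"
    by (rule persist_lim[OF subset_refl z]) (use persist[OF z c] in blast)
  then obtain d where "ev_lim r (Field r) (Gs g) g d = None" by blast
  then show False using L unfolding legal_def terminal_eq by blast
qed

subsection \<open>Runs over the identity labelling\<close>

lemma U_lim:
  assumes S: "S \<subseteq> Field r"
    and H: "\<forall>\<xi>\<in>S. \<forall>c. Gs id_labelling \<xi> c \<noteq> None \<and> Gs g \<xi> c = g (the (Gs id_labelling \<xi> c))"
    and L: "legal (ev_lim r S (Gs id_labelling) id_labelling)"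
  shows "ev_lim r S (Gs g) g c = g (the (ev_lim r S (Gs id_labelling) id_labelling c))"
proof (cases "S = {}")
  case True then show ?thesis by (simp add: id_labelling_def)
next
  case False
  obtain v where v: "ev_lim r S (Gs id_labelling) id_labelling c = Some v"
    using L by (auto simp: legal_def)
  have "evt r S (\<lambda>z. Gs id_labelling z c = Some v)"
    using ev_lim_evt2[OF wo S _ False, of "Gs id_labelling" id_labelling c] v by simp
  then have "evt r S (\<lambda>z. Gs g z c = g v)"
    by (rule evt_mono[OF wo]) (use H in force)
  then show ?thesis using ev_lim_evt[OF wo S] v by simp
qed

lemma U:
  "\<eta> \<in> Field r \<Longrightarrow> (\<forall>\<zeta>. (\<zeta>, \<eta>) \<in> r \<longrightarrow> legal (runF id_labelling \<zeta>))
    \<Longrightarrow> runF g \<eta> = (\<lambda>c. g (the (runF id_labelling \<eta> c)))"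
proof (induction \<eta> rule: wf_induct[OF wo_wf[OF wo]])
  case (1 \<eta>)
  have H: "\<forall>\<xi>\<in>underS r \<eta>. \<forall>c. Gs id_labelling \<xi> c \<noteq> None \<and> Gs g \<xi> c = g (the (Gs id_labelling \<xi> c))"
  proof (intro ballI allI)
    fix \<xi> c assume x: "\<xi> \<in> underS r \<eta>"
    then have x1: "(\<xi>, \<eta>) \<in> r - Id" "\<xi> \<in> Field r" "(\<xi>, \<eta>) \<in> r" by (auto simp: underS_def Field_def)
    have leg: "\<forall>\<zeta>. (\<zeta>, \<xi>) \<in> r \<longrightarrow> legal (runF id_labelling \<zeta>)"
      using 1(3) x1 wo_trans[OF wo] by blast
    have "runF g \<xi> = (\<lambda>c. g (the (runF id_labelling \<xi> c)))" using 1(1) x1 leg by blast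
    moreover have "legal (runF id_labelling \<xi>)" using 1(3) x1 by blast
    ultimately show "Gs id_labelling \<xi> c \<noteq> None \<and> Gs g \<xi> c = g (the (Gs id_labelling \<xi> c))"
      by (simp add: Gs_apply legal_def)
  qed
  have L: "legal (ev_lim r (underS r \<eta>) (Gs id_labelling) id_labelling)"
  proof -
    have "legal (runF id_labelling \<eta>)" using 1(3) wo_refl[OF wo 1(2)] by blast
    then show ?thesis unfolding runF_eq[of id_labelling \<eta>] .
  qed
  show ?case
    unfolding runF_eq[of g \<eta>] runF_eq[of id_labelling \<eta>]
    by (rule ext) (rule U_lim[OF underS_sub[OF wo] H L])
qed

end

definition rigid :: "('l cell \<Rightarrow> 'l cell) \<Rightarrow> bool" where
  "rigid \<rho> \<longleftrightarrow> (\<forall>c. \<exists>R\<in>Rot. \<forall>d. fst (Rep_cell d) = fst (Rep_cell c) \<longrightarrow> Rep_cell (\<rho> d) = apply_rot R (Rep_cell d))"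

definition good :: "('l cell \<Rightarrow> 'l cell) \<Rightarrow> bool" where
  "good \<rho> \<longleftrightarrow> inj \<rho> \<and> rigid \<rho> \<and> (\<forall>c. cls c (\<rho> c))"

lemma good_id: "good (\<lambda>c. c)"
  unfolding good_def rigid_def
proof (intro conjI)
  show "inj (\<lambda>c::'l cell. c)" by (rule injI) simp
  show "\<forall>c::'l cell. \<exists>R\<in>Rot. \<forall>d. fst (Rep_cell d) = fst (Rep_cell c) \<longrightarrow> Rep_cell d = apply_rot R (Rep_cell d)"
    by (intro allI bexI[OF _ idspec_Rot]) (simp add: apply_idspec)
  show "\<forall>c::'l cell. cls c c" by (simp add: cls_refl)
qed

lemma fst_gen: "fst (gen j (p, m)) = fst (gen j (p, m'))"
  by (cases j; cases p) (auto simp: gen_def)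

lemma rigid_comp_qt:
  assumes "rigid \<rho>"
  shows "rigid (\<rho> \<circ> quarter_turn j a)"
  unfolding rigid_def
proof
  fix c
  show "\<exists>R\<in>Rot. \<forall>d. fst (Rep_cell d) = fst (Rep_cell c) \<longrightarrow> Rep_cell ((\<rho> \<circ> quarter_turn j a) d) = apply_rot R (Rep_cell d)"
  proof (cases "coord_of j (fst (Rep_cell c)) = a")
    case True
    obtain R where R: "R \<in> Rot" "\<forall>e. fst (Rep_cell e) = fst (Rep_cell (quarter_turn j a c)) \<longrightarrow> Rep_cell (\<rho> e) = apply_rot R (Rep_cell e)"
      using assms unfolding rigid_def by blast
    have "Rep_cell ((\<rho> \<circ> quarter_turn j a) d) = apply_rot (rcomp R j) (Rep_cell d)"
      if d: "fst (Rep_cell d) = fst (Rep_cell c)" for d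
    proof -
      have q: "Rep_cell (quarter_turn j a d) = gen j (Rep_cell d)"
        using True d by (simp add: Rep_qt rot_raw_gen)
      have qc: "Rep_cell (quarter_turn j a c) = gen j (Rep_cell c)"
        using True by (simp add: Rep_qt rot_raw_gen)
      have "fst (Rep_cell (quarter_turn j a d)) = fst (Rep_cell (quarter_turn j a c))"
      proof -
        have e1: "gen j (Rep_cell d) = gen j (fst (Rep_cell d), snd (Rep_cell d))" by simp
        have e2: "gen j (Rep_cell c) = gen j (fst (Rep_cell c), snd (Rep_cell c))" by simp
        show ?thesis unfolding q qc e1 e2 d using fst_gen by blast
      qed
      then have "Rep_cell (\<rho> (quarter_turn j a d)) = apply_rot R (gen j (Rep_cell d))"
        using R(2) q by simp
      then show ?thesis using rcomp_apply'[OF R(1)] by simp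
    qed
    then show ?thesis using rcomp_Rot[OF R(1)] by blast
  next
    case False
    obtain R where R: "R \<in> Rot" "\<forall>e. fst (Rep_cell e) = fst (Rep_cell c) \<longrightarrow> Rep_cell (\<rho> e) = apply_rot R (Rep_cell e)"
      using assms unfolding rigid_def by blast
    have "quarter_turn j a d = d" if d: "fst (Rep_cell d) = fst (Rep_cell c)" for d
    proof -
      have "Rep_cell (quarter_turn j a d) = Rep_cell d" using False d by (simp add: Rep_qt rot_raw_gen)
      then show ?thesis using Rep_cell_inject by blast
    qed
    then show ?thesis using R by auto
  qed
qed

lemma good_comp_qt:
  assumes g: "good \<rho>" shows "good (\<rho> \<circ> quarter_turn j a)"
proof -
  have i: "inj (\<rho> \<circ> quarter_turn j a)"
    using g inj_compose[OF _ bij_is_inj[OF qt_bij]] unfolding good_def by blast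
  have rr: "rigid (\<rho> \<circ> quarter_turn j a)" using rigid_comp_qt g unfolding good_def by blast
  have "cls c ((\<rho> \<circ> quarter_turn j a) c)" for c
  proof -
    have "cls (quarter_turn j a c) (\<rho> (quarter_turn j a c))" using g unfolding good_def by blast
    from cls_trans[OF this cls_qt] show ?thesis by simp
  qed
  then show ?thesis using i rr unfolding good_def by blast
qed

lemma good_comp_qtpow: "good \<rho> \<Longrightarrow> good (\<rho> \<circ> (quarter_turn j a ^^ m))"
proof (induction m)
  case 0 then show ?case by simp
next
  case (Suc m)
  have eq: "\<rho> \<circ> (quarter_turn j a ^^ Suc m) = (\<rho> \<circ> (quarter_turn j a ^^ m)) \<circ> quarter_turn j a"
    by (simp only: funpow_Suc_right comp_assoc)
  show ?case unfolding eq by (rule good_comp_qt[OF Suc.IH[OF Suc.prems]])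
qed

lemma good_comp_inv: "s \<in> basic_twists \<Longrightarrow> good \<rho> \<Longrightarrow> good (\<rho> \<circ> inv s)"
proof -
  assume "s \<in> basic_twists" "good \<rho>"
  moreover obtain j a m where "inv s = quarter_turn j a ^^ m" using bt_inv[OF \<open>s \<in> basic_twists\<close>] by blast
  ultimately show ?thesis using good_comp_qtpow by simp
qed

lemma cells_at_point_finite: "finite {d :: 'l cell. fst (Rep_cell d) = q}"
proof -
  have "{d :: 'l cell. fst (Rep_cell d) = q} \<subseteq> (\<lambda>i. Abs_cell (q, i)) ` UNIV"
  proof
    fix d :: "'l cell" assume "d \<in> {d. fst (Rep_cell d) = q}"
    then have "Rep_cell d = (q, snd (Rep_cell d))" by (cases "Rep_cell d") simp
    then have "Abs_cell (Rep_cell d) = Abs_cell (q, snd (Rep_cell d))" by simp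
    then have "d = Abs_cell (q, snd (Rep_cell d))" by (simp add: Rep_cell_inverse)
    then show "d \<in> (\<lambda>i. Abs_cell (q, i)) ` UNIV" by blast
  qed
  moreover have "finite ((\<lambda>i. Abs_cell (q, i)) ` (UNIV :: axis set))" by (simp add: axis_UNIV)
  ultimately show ?thesis using finite_subset by blast
qed

lemma good_lim:
  assumes wo: "Well_order r" and S: "S \<subseteq> Field r"
    and gd: "\<forall>\<xi>\<in>S. good (\<rho>' \<xi>)"
    and G: "\<forall>\<xi>\<in>S. \<forall>c. G \<xi> c = Some (\<rho>' \<xi> c)"
    and L: "legal (ev_lim r S G id_labelling)"
  shows "good (\<lambda>c. the (ev_lim r S G id_labelling c))"
proof (cases "S = {}")
  case True then show ?thesis using good_id by (simp add: id_labelling_def)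
next
  case ne: False
  define \<rho> where "\<rho> c = the (ev_lim r S G id_labelling c)" for c
  have ev: "evt r S (\<lambda>z. \<rho>' z c = \<rho> c)" for c
  proof -
    have nn: "ev_lim r S G id_labelling c \<noteq> None" using L by (simp add: legal_def)
    have e: "evt r S (\<lambda>z. G z c = ev_lim r S G id_labelling c)"
      by (rule ev_lim_evt2[OF wo S nn ne])
    show ?thesis
      by (rule evt_mono[OF wo e]) (use G nn in \<open>auto simp: \<rho>_def\<close>)
  qed
  have ev2: "evt r S (\<lambda>z. \<forall>d\<in>C. \<rho>' z d = \<rho> d)" if "finite C" for C
    using evt_ball[OF wo that S ne, of "\<lambda>d z. \<rho>' z d = \<rho> d"] ev by blast
  have inj: "inj \<rho>"
  proof (rule injI)
    fix c1 c2 assume eq: "\<rho> c1 = \<rho> c2"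
    obtain z where z: "z \<in> S" "\<forall>d\<in>{c1, c2}. \<rho>' z d = \<rho> d"
      using evt_witness[OF wo S ev2[of "{c1, c2}"]] by auto
    then have "\<rho>' z c1 = \<rho>' z c2" using eq by simp
    then show "c1 = c2" using gd z(1) unfolding good_def by (meson injD)
  qed
  have cl: "cls c (\<rho> c)" for c
  proof -
    obtain z where z: "z \<in> S" "\<rho>' z c = \<rho> c" using evt_witness[OF wo S ev[of c]] by blast
    have "cls c (\<rho>' z c)" using gd z(1) unfolding good_def by blast
    then show ?thesis using z(2) by simp
  qed
  have rg: "rigid \<rho>"
    unfolding rigid_def
  proof
    fix c
    obtain z where z: "z \<in> S" "\<forall>d\<in>{d. fst (Rep_cell d) = fst (Rep_cell c)}. \<rho>' z d = \<rho> d"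
      using evt_witness[OF wo S ev2[OF cells_at_point_finite]] by blast
    obtain R where R: "R \<in> Rot" "\<forall>d. fst (Rep_cell d) = fst (Rep_cell c) \<longrightarrow> Rep_cell (\<rho>' z d) = apply_rot R (Rep_cell d)"
      using gd z(1) unfolding good_def rigid_def by blast
    show "\<exists>R\<in>Rot. \<forall>d. fst (Rep_cell d) = fst (Rep_cell c) \<longrightarrow> Rep_cell (\<rho> d) = apply_rot R (Rep_cell d)"
      using R z(2) by auto
  qed
  show ?thesis using inj cl rg unfolding good_def \<rho>_def by blast
qed

lemma nx_neq: "nx j \<noteq> j" "nx (nx j) \<noteq> j" "nx (nx j) \<noteq> nx j"
  by (cases j; simp)+

lemma Ap_coord: "i \<noteq> j \<Longrightarrow> coord_of i (Ap j a s) = s"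
  by (cases i; cases j; simp add: Ap_def)

lemma Rep_Ap: "i \<noteq> j \<Longrightarrow> s \<in> {PInf, MInf} \<Longrightarrow> Rep_cell (Abs_cell (Ap j a s, i)) = (Ap j a s, i)"
  by (rule Rep_Abs_cell) (simp add: iscell_def Ap_coord)

lemma rot2: "i \<noteq> j \<Longrightarrow> (rot_raw j a ^^ 2) (Ap j a PInf, i) = (Ap j a MInf, i)"
  by (cases j; cases i; simp add: Ap_def numeral_2_eq_2)

lemma qt2_Ac: "i \<noteq> j \<Longrightarrow> (quarter_turn j a ^^ 2) (Abs_cell (Ap j a PInf, i)) = Abs_cell (Ap j a MInf, i)"
proof -
  assume ij: "i \<noteq> j"
  have "Rep_cell ((quarter_turn j a ^^ 2) (Abs_cell (Ap j a PInf, i))) = (Ap j a MInf, i)"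
    using ij by (simp add: Rep_qt_pow Rep_Ap rot2)
  also have "\<dots> = Rep_cell (Abs_cell (Ap j a MInf, i))" using ij by (simp add: Rep_Ap)
  finally show ?thesis using Rep_cell_inject by blast
qed

definition Dset :: "axis \<Rightarrow> 'l coord \<Rightarrow> 'l cell set" where
  "Dset j a = (\<lambda>(m, i). (quarter_turn j a ^^ m) (Abs_cell (Ap j a PInf, i))) ` ({..<4} \<times> {nx j, nx (nx j)})"

lemma Dset_finite: "finite (Dset j a)"
  unfolding Dset_def by simp

lemma Dset_Ac: "i \<in> {nx j, nx (nx j)} \<Longrightarrow> Abs_cell (Ap j a PInf, i) \<in> Dset j a"
  unfolding Dset_def by (rule image_eqI[of _ _ "(0, i)"]) auto

lemma Dset_closed: "d \<in> Dset j a \<Longrightarrow> quarter_turn j a d \<in> Dset j a"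
proof -
  assume "d \<in> Dset j a"
  then obtain m i where mi: "m < 4" "i \<in> {nx j, nx (nx j)}" "d = (quarter_turn j a ^^ m) (Abs_cell (Ap j a PInf, i))"
    unfolding Dset_def by auto
  have "quarter_turn j a d = (quarter_turn j a ^^ Suc m) (Abs_cell (Ap j a PInf, i))"
    using mi(3) by simp
  also have "\<dots> = (quarter_turn j a ^^ (Suc m mod 4)) (Abs_cell (Ap j a PInf, i))"
    by (subst qt_pow_mod4) (rule refl)
  finally have e: "quarter_turn j a d = (quarter_turn j a ^^ (Suc m mod 4)) (Abs_cell (Ap j a PInf, i))" .
  show ?thesis unfolding e Dset_def using mi(2) by (intro image_eqI[of _ _ "(Suc m mod 4, i)"]) auto
qed

lemma Dset_closed_pow: "d \<in> Dset j a \<Longrightarrow> (quarter_turn j a ^^ k) d \<in> Dset j a"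
  by (induction k) (auto intro: Dset_closed)

lemma pc_lemma:
  assumes g: "good \<rho>" and n: "n \<in> {1, 2, 3}"
    and inv: "\<forall>d\<in>Dset j a. f_solved (\<rho> (inv (quarter_turn j a ^^ n) d)) = f_solved (\<rho> d)"
  shows False
proof -
  let ?T = "quarter_turn j a"
  define F where "F d = f_solved (\<rho> d)" for d
  have h: "inv (?T ^^ n) = ?T ^^ (4 - n)" using n qt_pow_inv[of n j a] by auto
  have step: "\<forall>d\<in>Dset j a. F ((?T ^^ (4 - n)) d) = F d" using inv h by (simp add: F_def)
  have all: "F (((?T ^^ (4 - n)) ^^ k) d) = F d" if "d \<in> Dset j a" for k d
  proof (induction k)
    case 0 then show ?case by simp
  next
    case (Suc k)
    have "((?T ^^ (4 - n)) ^^ Suc k) d = (?T ^^ (4 - n)) (((?T ^^ (4 - n)) ^^ k) d)" by simp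
    moreover have "((?T ^^ (4 - n)) ^^ k) d \<in> Dset j a"
      using Dset_closed_pow[OF that] by (simp add: funpow_mult)
    ultimately show ?case using step Suc by simp
  qed
  have "\<exists>k. ((4 - n) * k) mod 4 = 2"
  proof -
    from n have "n = 1 \<or> n = 2 \<or> n = 3" by auto
    then show ?thesis
    proof (elim disjE)
      assume "n = 1" then show ?thesis by (intro exI[of _ 2]) simp
    next
      assume "n = 2" then show ?thesis by (intro exI[of _ 1]) simp
    next
      assume "n = 3" then show ?thesis by (intro exI[of _ 2]) simp
    qed
  qed
  then obtain k where k: "((4 - n) * k) mod 4 = 2" by blast
  have T2: "F ((?T ^^ 2) d) = F d" if "d \<in> Dset j a" for d
  proof -
    have "F (((?T ^^ (4 - n)) ^^ k) d) = F d" using all[OF that] .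
    moreover have "(?T ^^ (4 - n)) ^^ k = ?T ^^ 2"
      using qt_pow_mod4[where n="(4 - n) * k" and j=j and a=a] k by (simp add: funpow_mult)
    ultimately show ?thesis by simp
  qed
  define i1 where "i1 = nx j"
  define i2 where "i2 = nx (nx j)"
  define A where "A = (Ap j a PInf :: 'a point)"
  define B where "B = (Ap j a MInf :: 'a point)"
  have ne: "i1 \<noteq> j" "i2 \<noteq> j" using nx_neq i1_def i2_def by auto
  have RA: "Rep_cell (Abs_cell (A, i)) = (A, i)" "Rep_cell (Abs_cell (B, i)) = (B, i)" if "i \<noteq> j" for i
    using Rep_Ap[OF that] A_def B_def by auto
  have colors: "solved_raw (Rep_cell (\<rho> (Abs_cell (B, i)))) = solved_raw (Rep_cell (\<rho> (Abs_cell (A, i))))"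
    if "i \<in> {i1, i2}" for i
  proof -
    have "F ((?T ^^ 2) (Abs_cell (A, i))) = F (Abs_cell (A, i))"
      using T2 Dset_Ac that i1_def i2_def A_def by blast
    moreover have "(?T ^^ 2) (Abs_cell (A, i)) = Abs_cell (B, i)"
      using qt2_Ac ne that A_def B_def by auto
    ultimately show ?thesis by (simp add: F_def f_solved_def)
  qed
  obtain RA where RA1: "RA \<in> Rot" "\<forall>d. fst (Rep_cell d) = fst (Rep_cell (Abs_cell (A, i1))) \<longrightarrow> Rep_cell (\<rho> d) = apply_rot RA (Rep_cell d)"
    using g unfolding good_def rigid_def by blast
  obtain RB where RB1: "RB \<in> Rot" "\<forall>d. fst (Rep_cell d) = fst (Rep_cell (Abs_cell (B, i1))) \<longrightarrow> Rep_cell (\<rho> d) = apply_rot RB (Rep_cell d)"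
    using g unfolding good_def rigid_def by blast
  have eA: "Rep_cell (\<rho> (Abs_cell (A, i))) = apply_rot RA (A, i)" if "i \<in> {i1, i2}" for i
    using RA1(2) RA ne that by auto
  have eB: "Rep_cell (\<rho> (Abs_cell (B, i))) = apply_rot RB (B, i)" if "i \<in> {i1, i2}" for i
    using RB1(2) RA ne that by auto
  have "apply_rot RA (A, i1) = apply_rot RB (B, i1)"
    unfolding A_def B_def i1_def
    apply (rule key_colors[OF RA1(1) RB1(1)])
    using colors eA eB unfolding A_def B_def i1_def i2_def by auto
  then have "Rep_cell (\<rho> (Abs_cell (A, i1))) = Rep_cell (\<rho> (Abs_cell (B, i1)))"
    using eA[of i1] eB[of i1] by simp
  then have "\<rho> (Abs_cell (A, i1)) = \<rho> (Abs_cell (B, i1))"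
    using Rep_cell_inject by blast
  then have "Abs_cell (A, i1) = Abs_cell (B, i1)" using g unfolding good_def inj_def by blast
  then have "Rep_cell (Abs_cell (A, i1)) = Rep_cell (Abs_cell (B, i1))" by simp
  then have "(A, i1) = (B, i1)" using RA[OF ne(1)] by simp
  then have "coord_of i1 A = coord_of i1 B" by simp
  then show False using Ap_coord[OF ne(1), where a=a] A_def B_def by simp
qed

context
  fixes r :: "'i rel" and \<sigma> :: "'i \<Rightarrow> 'l cell \<Rightarrow> 'l cell"
  assumes wo: "Well_order r" and bs: "\<forall>\<eta>\<in>Field r. \<sigma> \<eta> \<in> basic_twists"
begin

abbreviation "RF \<equiv> runF r \<sigma>"
abbreviation "GS \<equiv> Gs r \<sigma>"

lemma rf_eq: "RF g \<eta> = ev_lim r (underS r \<eta>) (GS g) g"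
  by (rule runF_eq[OF wo bs])

lemma gs_apply: "GS g \<zeta> c = RF g \<zeta> (inv (\<sigma> \<zeta>) c)"
  by (rule Gs_apply[OF wo bs])

lemma term_eq: "terminal r \<sigma> g = ev_lim r (Field r) (GS g) g"
  by (rule terminal_eq[OF wo bs])

lemma Q:
  "\<eta> \<in> Field r \<Longrightarrow> (\<forall>\<zeta>. (\<zeta>, \<eta>) \<in> r \<longrightarrow> legal (RF id_labelling \<zeta>))
    \<Longrightarrow> good (\<lambda>c. the (RF id_labelling \<eta> c))"
proof (induction \<eta> rule: wf_induct[OF wo_wf[OF wo]])
  case (1 \<eta>)
  have gd: "\<forall>\<xi>\<in>underS r \<eta>. good ((\<lambda>c. the (RF id_labelling \<xi> c)) \<circ> inv (\<sigma> \<xi>))"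
  proof
    fix \<xi> assume x: "\<xi> \<in> underS r \<eta>"
    then have x1: "(\<xi>, \<eta>) \<in> r - Id" "\<xi> \<in> Field r" "(\<xi>, \<eta>) \<in> r" by (auto simp: underS_def Field_def)
    have "\<forall>\<zeta>. (\<zeta>, \<xi>) \<in> r \<longrightarrow> legal (RF id_labelling \<zeta>)"
      using 1(3) x1 wo_trans[OF wo] by blast
    then have "good (\<lambda>c. the (RF id_labelling \<xi> c))" using 1(1) x1 by blast
    then show "good ((\<lambda>c. the (RF id_labelling \<xi> c)) \<circ> inv (\<sigma> \<xi>))"
      using good_comp_inv bs x1(2) by blast
  qed
  have G: "\<forall>\<xi>\<in>underS r \<eta>. \<forall>c. GS id_labelling \<xi> c = Some (((\<lambda>c. the (RF id_labelling \<xi> c)) \<circ> inv (\<sigma> \<xi>)) c)"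
  proof (intro ballI allI)
    fix \<xi> c assume x: "\<xi> \<in> underS r \<eta>"
    then have "legal (RF id_labelling \<xi>)" using 1(3) by (auto simp: underS_def)
    then show "GS id_labelling \<xi> c = Some (((\<lambda>c. the (RF id_labelling \<xi> c)) \<circ> inv (\<sigma> \<xi>)) c)"
      by (auto simp: gs_apply legal_def)
  qed
  have L: "legal (ev_lim r (underS r \<eta>) (GS id_labelling) id_labelling)"
  proof -
    have "legal (RF id_labelling \<eta>)" using 1(3) wo_refl[OF wo 1(2)] by blast
    then show ?thesis unfolding rf_eq .
  qed
  show ?case unfolding rf_eq[of id_labelling \<eta>]
    by (rule good_lim[OF wo underS_sub[OF wo] gd G L])
qed

lemma Q_term:
  assumes "\<forall>\<zeta>\<in>Field r. legal (RF id_labelling \<zeta>)" "legal (terminal r \<sigma> id_labelling)"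
  shows "good (\<lambda>c. the (terminal r \<sigma> id_labelling c))"
proof -
  have gd: "\<forall>\<xi>\<in>Field r. good ((\<lambda>c. the (RF id_labelling \<xi> c)) \<circ> inv (\<sigma> \<xi>))"
  proof
    fix \<xi> assume x: "\<xi> \<in> Field r"
    have "good (\<lambda>c. the (RF id_labelling \<xi> c))" using Q x assms(1) in_Field1[OF wo] by blast
    then show "good ((\<lambda>c. the (RF id_labelling \<xi> c)) \<circ> inv (\<sigma> \<xi>))"
      using good_comp_inv bs x by blast
  qed
  have G: "\<forall>\<xi>\<in>Field r. \<forall>c. GS id_labelling \<xi> c = Some (((\<lambda>c. the (RF id_labelling \<xi> c)) \<circ> inv (\<sigma> \<xi>)) c)"
    using assms(1) by (auto simp: gs_apply legal_def)
  show ?thesis unfolding term_eq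
  proof (rule good_lim[OF wo subset_refl gd G])
    show "legal (ev_lim r (Field r) (GS id_labelling) id_labelling)"
      using assms(2) unfolding term_eq .
  qed
qed

lemma const:
  assumes z0: "z0 \<in> Field r"
  shows "z \<in> Field r \<Longrightarrow> (z0, z) \<in> r \<Longrightarrow> (\<forall>\<xi>. (z0, \<xi>) \<in> r \<and> \<xi> \<noteq> z0 \<and> (\<xi>, z) \<in> r \<longrightarrow> \<sigma> \<xi> c = c)
    \<Longrightarrow> GS g z c = GS g z0 c"
proof (induction z rule: wf_induct[OF wo_wf[OF wo]])
  case (1 z)
  show ?case
  proof (cases "z = z0")
    case True then show ?thesis by simp
  next
    case False
    have sc: "\<sigma> z c = c" using 1(4) 1(3) False wo_refl[OF wo 1(2)] by blast
    have ic: "inv (\<sigma> z) c = c"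
      using sc bij_is_inj[OF sig_bij[OF wo bs 1(2)]] by (metis inv_f_eq)
    have "evt r (underS r z) (\<lambda>y. GS g y c = GS g z0 c)"
      unfolding evt_def
    proof (rule bexI[of _ z0])
      show "z0 \<in> underS r z" using False 1(3) by (simp add: underS_def)
      show "\<forall>y\<in>underS r z. (z0, y) \<in> r \<longrightarrow> GS g y c = GS g z0 c"
      proof (intro ballI impI)
        fix y assume y: "y \<in> underS r z" "(z0, y) \<in> r"
        then have y1: "(y, z) \<in> r - Id" "y \<in> Field r" "(y, z) \<in> r" by (auto simp: underS_def Field_def)
        have "\<forall>\<xi>. (z0, \<xi>) \<in> r \<and> \<xi> \<noteq> z0 \<and> (\<xi>, y) \<in> r \<longrightarrow> \<sigma> \<xi> c = c"
          using 1(4) y1(3) wo_trans[OF wo] by blast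
        then show "GS g y c = GS g z0 c" using 1(1) y1 y(2) by blast
      qed
    qed
    then have "ev_lim r (underS r z) (GS g) g c = GS g z0 c"
      by (rule ev_lim_evt[OF wo underS_sub[OF wo]])
    then show ?thesis using ic by (simp add: gs_apply rf_eq[of g z])
  qed
qed


definition TW :: "'l cell \<Rightarrow> ('l cell \<Rightarrow> 'l cell) set" where
  "TW c = (\<lambda>(j, n). quarter_turn j (coord_of j (fst (Rep_cell c))) ^^ n) ` (UNIV \<times> {1, 2, 3})"

lemma TW_finite: "finite (TW c)"
  unfolding TW_def by (simp add: axis_UNIV)

lemma qtpow_fix: "coord_of j (fst (Rep_cell c)) \<noteq> a \<Longrightarrow> (quarter_turn j a ^^ n) c = c"
proof -
  assume ne: "coord_of j (fst (Rep_cell c)) \<noteq> a"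
  have "(rot_raw j a ^^ n) (Rep_cell c) = Rep_cell c"
    by (induction n) (use ne in \<open>auto simp: rot_raw_gen\<close>)
  then have "Rep_cell ((quarter_turn j a ^^ n) c) = Rep_cell c" by (simp add: Rep_qt_pow)
  then show ?thesis using Rep_cell_inject by blast
qed

lemma moves_TW: "\<xi> \<in> Field r \<Longrightarrow> \<sigma> \<xi> c \<noteq> c \<Longrightarrow> \<sigma> \<xi> \<in> TW c"
proof -
  assume x: "\<xi> \<in> Field r" and m: "\<sigma> \<xi> c \<noteq> c"
  obtain j a n where jan: "\<sigma> \<xi> = quarter_turn j a ^^ n" "n \<in> {1, 2, 3}"
    using bt_form bs x by blast
  have "a = coord_of j (fst (Rep_cell c))"
  proof (rule ccontr)
    assume "a \<noteq> coord_of j (fst (Rep_cell c))"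
    then have "(quarter_turn j a ^^ n) c = c" using qtpow_fix[where j=j and c=c and a=a and n=n] by simp
    then show False using m jan(1) by simp
  qed
  then show ?thesis unfolding TW_def using jan by (intro image_eqI[of _ _ "(j, n)"]) auto
qed

lemma hard:
  assumes S: "S \<subseteq> Field r" and down: "\<forall>z\<in>S. \<forall>y. (y, z) \<in> r \<longrightarrow> y \<in> S"
    and Li: "\<forall>\<xi>\<in>S. legal (RF id_labelling \<xi>)"
    and Ls: "legal (ev_lim r S (GS f_solved) f_solved)"
  shows "legal (ev_lim r S (GS id_labelling) id_labelling)"
  unfolding legal_def
proof
  fix c
  show "ev_lim r S (GS id_labelling) id_labelling c \<noteq> None"
  proof (cases "S = {}")
    case True then show ?thesis by (simp add: id_labelling_def)
  next
    case ne: False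
    show ?thesis
    proof
      assume N: "ev_lim r S (GS id_labelling) id_labelling c = None"
      have leq: "\<forall>\<zeta>. (\<zeta>, \<xi>) \<in> r \<longrightarrow> legal (RF id_labelling \<zeta>)" if "\<xi> \<in> S" for \<xi>
        using down Li that by blast
      have A: "\<exists>\<xi>\<in>S. (z0, \<xi>) \<in> r \<and> \<xi> \<noteq> z0 \<and> \<sigma> \<xi> c \<noteq> c" if z0: "z0 \<in> S" for z0
      proof (rule ccontr)
        assume "\<not> ?thesis"
        then have fix1: "\<forall>\<xi>\<in>S. (z0, \<xi>) \<in> r \<and> \<xi> \<noteq> z0 \<longrightarrow> \<sigma> \<xi> c = c" by blast
        have "evt r S (\<lambda>z. GS id_labelling z c = GS id_labelling z0 c)"
          unfolding evt_def
        proof (rule bexI[OF _ z0], intro ballI impI)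
          fix z assume z: "z \<in> S" "(z0, z) \<in> r"
          have hyp: "\<forall>\<xi>. (z0, \<xi>) \<in> r \<and> \<xi> \<noteq> z0 \<and> (\<xi>, z) \<in> r \<longrightarrow> \<sigma> \<xi> c = c"
          proof (intro allI impI)
            fix \<xi> assume h: "(z0, \<xi>) \<in> r \<and> \<xi> \<noteq> z0 \<and> (\<xi>, z) \<in> r"
            then have "\<xi> \<in> S" using down z(1) by blast
            then show "\<sigma> \<xi> c = c" using fix1 h by blast
          qed
          have z0F: "z0 \<in> Field r" and zF: "z \<in> Field r" using S z0 z(1) by auto
          show "GS id_labelling z c = GS id_labelling z0 c"
            by (rule const[OF z0F zF z(2) hyp])
        qed
        then have "ev_lim r S (GS id_labelling) id_labelling c = GS id_labelling z0 c"
          by (rule ev_lim_evt[OF wo S])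
        moreover have "GS id_labelling z0 c \<noteq> None"
          using Li z0 by (simp add: gs_apply legal_def)
        ultimately show False using N by simp
      qed
      have C: "\<exists>T\<in>TW c. \<forall>z0\<in>S. \<exists>\<xi>\<in>S. (z0, \<xi>) \<in> r \<and> \<xi> \<noteq> z0 \<and> \<sigma> \<xi> = T"
      proof (rule ccontr)
        assume "\<not> ?thesis"
        then have nb: "\<forall>T\<in>TW c. \<exists>z0\<in>S. \<forall>\<xi>\<in>S. (z0, \<xi>) \<in> r \<and> \<xi> \<noteq> z0 \<longrightarrow> \<sigma> \<xi> \<noteq> T" by blast
        define P where "P T z = (\<forall>\<xi>\<in>S. (z, \<xi>) \<in> r \<and> \<xi> \<noteq> z \<longrightarrow> \<sigma> \<xi> \<noteq> T)" for T z
        have "\<forall>T\<in>TW c. evt r S (P T)"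
        proof
          fix T assume "T \<in> TW c"
          then obtain z0 where z0: "z0 \<in> S" "\<forall>\<xi>\<in>S. (z0, \<xi>) \<in> r \<and> \<xi> \<noteq> z0 \<longrightarrow> \<sigma> \<xi> \<noteq> T" using nb by blast
          show "evt r S (P T)"
            unfolding evt_def
          proof (rule bexI[OF _ z0(1)], intro ballI impI)
            fix z assume z: "z \<in> S" "(z0, z) \<in> r"
            show "P T z" unfolding P_def
            proof (intro ballI impI)
              fix \<xi> assume x: "\<xi> \<in> S" "(z, \<xi>) \<in> r \<and> \<xi> \<noteq> z"
              have "(z0, \<xi>) \<in> r" using z(2) x(2) wo_trans[OF wo] by blast
              moreover have "\<xi> \<noteq> z0" using z(2) x(2) wo_antisym[OF wo] by blast
              ultimately show "\<sigma> \<xi> \<noteq> T" using z0(2) x(1) by blast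
            qed
          qed
        qed
        then have "evt r S (\<lambda>z. \<forall>T\<in>TW c. P T z)"
          using evt_ball[OF wo TW_finite S ne, where P=P] by blast
        then obtain zs where zs: "zs \<in> S" "\<forall>T\<in>TW c. P T zs"
          using evt_witness[OF wo S] by blast
        obtain \<xi> where x: "\<xi> \<in> S" "(zs, \<xi>) \<in> r" "\<xi> \<noteq> zs" "\<sigma> \<xi> c \<noteq> c" using A[OF zs(1)] by blast
        have "\<xi> \<in> Field r" using x(1) S by blast
        then have "\<sigma> \<xi> \<in> TW c" using moves_TW x(4) by blast
        then have "P (\<sigma> \<xi>) zs" using zs(2) by blast
        then have "\<sigma> \<xi> \<noteq> \<sigma> \<xi>" using x(1,2,3) unfolding P_def by blast
        then show False by simp
      qed
      then obtain T where T: "T \<in> TW c" "\<forall>z0\<in>S. \<exists>\<xi>\<in>S. (z0, \<xi>) \<in> r \<and> \<xi> \<noteq> z0 \<and> \<sigma> \<xi> = T"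
        by blast
      obtain p where p: "p \<in> UNIV \<times> {1, 2, 3}" "T = (\<lambda>(j, n). quarter_turn j (coord_of j (fst (Rep_cell c))) ^^ n) p"
        using T(1) unfolding TW_def by (rule imageE)
      obtain j n where jn0: "p = (j, n)" by (cases p)
      have jn: "n \<in> {1, 2, 3}" "T = quarter_turn j (coord_of j (fst (Rep_cell c))) ^^ n"
        using p unfolding jn0 by auto
      define \<alpha> where "\<alpha> = coord_of j (fst (Rep_cell c))"
      define V where "V = ev_lim r S (GS f_solved) f_solved"
      have "\<forall>d\<in>Dset j \<alpha>. evt r S (\<lambda>z. GS f_solved z d = V d)"
      proof
        fix d
        have "V d \<noteq> None" using Ls V_def by (simp add: legal_def)
        then show "evt r S (\<lambda>z. GS f_solved z d = V d)"
          unfolding V_def by (rule ev_lim_evt2[OF wo S _ ne])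
      qed
      then have "evt r S (\<lambda>z. \<forall>d\<in>Dset j \<alpha>. GS f_solved z d = V d)"
        using evt_ball[OF wo Dset_finite S ne, where P="\<lambda>d z. GS f_solved z d = V d"] by blast
      then obtain z1 where z1: "z1 \<in> S" "\<forall>z\<in>S. (z1, z) \<in> r \<longrightarrow> (\<forall>d\<in>Dset j \<alpha>. GS f_solved z d = V d)"
        using evt_witness[OF wo S] by blast
      obtain \<xi> where x: "\<xi> \<in> S" "(z1, \<xi>) \<in> r" "\<xi> \<noteq> z1" "\<sigma> \<xi> = T" using T(2) z1(1) by blast
      have xF: "\<xi> \<in> Field r" using x(1) S by blast
      have rf: "RF f_solved \<xi> d = V d" if d: "d \<in> Dset j \<alpha>" for d
      proof -
        have "evt r (underS r \<xi>) (\<lambda>z. GS f_solved z d = V d)"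
          unfolding evt_def
        proof (rule bexI[of _ z1], intro ballI impI)
          show "z1 \<in> underS r \<xi>" using x(2,3) by (simp add: underS_def)
          fix z assume z: "z \<in> underS r \<xi>" "(z1, z) \<in> r"
          then have "z \<in> S" using down x(1) by (auto simp: underS_def)
          then show "GS f_solved z d = V d" using z1(2) z(2) d by blast
        qed
        then have "ev_lim r (underS r \<xi>) (GS f_solved) f_solved d = V d"
          by (rule ev_lim_evt[OF wo underS_sub[OF wo]])
        then show ?thesis by (simp add: rf_eq)
      qed
      have gs: "GS f_solved \<xi> d = V d" if "d \<in> Dset j \<alpha>" for d
        using z1(2) x(1,2) that by blast
      define \<rho> where "\<rho> c = the (RF id_labelling \<xi> c)" for c
      have U\<xi>: "RF f_solved \<xi> = (\<lambda>c. f_solved (\<rho> c))"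
        unfolding \<rho>_def by (rule U[OF wo bs xF leq[OF x(1)]])
      have g\<xi>: "good \<rho>" unfolding \<rho>_def by (rule Q[OF xF leq[OF x(1)]])
      have "\<forall>d\<in>Dset j \<alpha>. f_solved (\<rho> (inv (quarter_turn j \<alpha> ^^ n) d)) = f_solved (\<rho> d)"
      proof
        fix d assume d: "d \<in> Dset j \<alpha>"
        have "RF f_solved \<xi> (inv (\<sigma> \<xi>) d) = RF f_solved \<xi> d"
          using rf[OF d] gs[OF d] by (simp add: gs_apply)
        then show "f_solved (\<rho> (inv (quarter_turn j \<alpha> ^^ n) d)) = f_solved (\<rho> d)"
          using x(4) jn(2) U\<xi> \<alpha>_def by simp
      qed
      then show False using pc_lemma[OF g\<xi> jn(1)] by blast
    qed
  qed
qed

lemma legal_id_all: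
  assumes L: "legal (terminal r \<sigma> f_solved)"
  shows "\<eta> \<in> Field r \<Longrightarrow> legal (RF id_labelling \<eta>)"
proof (induction \<eta> rule: wf_induct[OF wo_wf[OF wo]])
  case (1 \<eta>)
  have "legal (ev_lim r (underS r \<eta>) (GS id_labelling) id_labelling)"
  proof (rule hard[OF underS_sub[OF wo]])
    show "\<forall>z\<in>underS r \<eta>. \<forall>y. (y, z) \<in> r \<longrightarrow> y \<in> underS r \<eta>"
      using underS_down[OF wo] by blast
    show "\<forall>\<xi>\<in>underS r \<eta>. legal (RF id_labelling \<xi>)"
      using 1(1) by (auto simp: underS_def Field_def)
    show "legal (ev_lim r (underS r \<eta>) (GS f_solved) f_solved)"
      using legal_all[OF wo bs L 1(2)] by (simp add: rf_eq)
  qed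
  then show ?case by (simp add: rf_eq)
qed

lemma part1_fwd:
  assumes L: "legal (terminal r \<sigma> f_solved)"
  shows "legal (terminal r \<sigma> id_labelling)"
proof -
  have "legal (ev_lim r (Field r) (GS id_labelling) id_labelling)"
  proof (rule hard[OF subset_refl])
    show "\<forall>z\<in>Field r. \<forall>y. (y, z) \<in> r \<longrightarrow> y \<in> Field r" using in_Field1[OF wo] by blast
    show "\<forall>\<xi>\<in>Field r. legal (RF id_labelling \<xi>)" using legal_id_all[OF L] by blast
    show "legal (ev_lim r (Field r) (GS f_solved) f_solved)" using L by (simp add: term_eq)
  qed
  then show ?thesis by (simp add: term_eq)
qed

lemma universal:
  assumes L: "legal (terminal r \<sigma> id_labelling)"
  shows "terminal r \<sigma> g = (\<lambda>c. g (the (terminal r \<sigma> id_labelling c)))"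
proof -
  have all: "\<forall>\<zeta>\<in>Field r. legal (RF id_labelling \<zeta>)" using legal_all[OF wo bs L] by blast
  have H: "\<forall>\<xi>\<in>Field r. \<forall>c. GS id_labelling \<xi> c \<noteq> None \<and> GS g \<xi> c = g (the (GS id_labelling \<xi> c))"
  proof (intro ballI allI)
    fix \<xi> c assume x: "\<xi> \<in> Field r"
    have "RF g \<xi> = (\<lambda>c. g (the (RF id_labelling \<xi> c)))"
      using U[OF wo bs x] all in_Field1[OF wo] by blast
    then show "GS id_labelling \<xi> c \<noteq> None \<and> GS g \<xi> c = g (the (GS id_labelling \<xi> c))"
      using all x by (simp add: gs_apply legal_def)
  qed
  have L': "legal (ev_lim r (Field r) (GS id_labelling) id_labelling)" using L by (simp add: term_eq)
  show ?thesis unfolding term_eq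
    by (rule ext) (rule U_lim[OF wo bs subset_refl H L'])
qed

lemma part1_bwd:
  assumes L: "legal (terminal r \<sigma> id_labelling)"
  shows "legal (terminal r \<sigma> f_solved)"
  using universal[OF L, of f_solved] by (simp add: legal_def f_solved_def)

end

section \<open>The constant k24\<close>

lemma perm_order_props:
  assumes "\<pi> permutes {1..24::nat}"
  shows "0 < perm_order \<pi> \<and> \<pi> ^^ perm_order \<pi> = id"
proof -
  have "permutation \<pi>" using permutes_imp_permutation[OF _ assms] by simp
  then obtain n where n: "\<pi> ^^ n = id" "n > 0" by (rule permutation_is_nilpotent)
  then have "\<exists>n. 0 < n \<and> \<pi> ^^ n = id" by blast
  then show ?thesis unfolding perm_order_def by (rule LeastI_ex)
qed

lemma k24_set_finite: "finite {perm_order \<pi> | \<pi>. \<pi> permutes {1..24::nat}}"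
proof -
  have "{perm_order \<pi> | \<pi>. \<pi> permutes {1..24::nat}} = perm_order ` {\<pi>. \<pi> permutes {1..24::nat}}" by blast
  then show ?thesis using finite_permutations[of "{1..24::nat}"] by simp
qed

lemma k24_pos: "0 < k24"
proof -
  have "0 \<notin> {perm_order \<pi> | \<pi>. \<pi> permutes {1..24::nat}}" using perm_order_props by fastforce
  then have "Lcm {perm_order \<pi> | \<pi>. \<pi> permutes {1..24::nat}} \<noteq> 0"
    using Lcm_0_iff[OF k24_set_finite] by blast
  then show ?thesis unfolding k24_def by simp
qed

lemma dvd_k24: "\<pi> permutes {1..24::nat} \<Longrightarrow> perm_order \<pi> dvd k24"
  unfolding k24_def by (rule dvd_Lcm) blast

lemma class_order:
  assumes inj: "inj \<rho>" and cl: "\<forall>c. cls c (\<rho> c)"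
  shows "(\<rho> ^^ k24) c = c"
proof -
  define K where "K = {d. cls c d}"
  have fK: "finite K" and cK: "card K \<le> 24" using cls_finite_card K_def by auto
  have into: "\<rho> ` K \<subseteq> K" using cl cls_trans unfolding K_def by blast
  have "\<rho> ` K = K" by (rule endo_inj_surj[OF fK into]) (use inj in \<open>simp add: inj_on_def\<close>)
  then have bK: "bij_betw \<rho> K K" using inj by (simp add: bij_betw_def inj_on_def inj_def)
  have powK: "(\<rho> ^^ k) e \<in> K" if "e \<in> K" for k e
    using that into by (induction k) auto
  define n where "n = card K"
  obtain h where h: "bij_betw h {1..n} K" using ex_bij_betw_nat_finite_1[OF fK] n_def by blast
  define hi where "hi = inv_into {1..n} h"
  have hi: "bij_betw hi K {1..n}" unfolding hi_def by (rule bij_betw_inv_into[OF h])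
  define \<pi> where "\<pi> x = (if x \<in> {1..n} then hi (\<rho> (h x)) else x)" for x
  have "bij_betw (hi \<circ> (\<rho> \<circ> h)) {1..n} {1..n}"
    by (rule bij_betw_trans[OF bij_betw_trans[OF h bK] hi])
  then have bpi: "bij_betw \<pi> {1..n} {1..n}"
    by (rule iffD1[OF bij_betw_cong, rotated]) (simp add: \<pi>_def)
  have pin: "\<pi> permutes {1..n}"
    by (rule bij_imp_permutes[OF bpi]) (auto simp: \<pi>_def)
  have pi24: "\<pi> permutes {1..24}"
    by (rule permutes_subset[OF pin]) (use cK n_def in auto)
  have hK: "h x \<in> K" if "x \<in> {1..n}" for x using h that bij_betwE by blast
  have hih: "hi (h x) = x" if "x \<in> {1..n}" for x
    using h that unfolding hi_def by (simp add: bij_betw_def inv_into_f_f)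
  have hhi: "h (hi e) = e" if "e \<in> K" for e
    using h that unfolding hi_def by (simp add: bij_betw_def f_inv_into_f)
  have hiK: "hi e \<in> {1..n}" if "e \<in> K" for e using hi that bij_betwE by blast
  have pipow: "(\<pi> ^^ k) x = hi ((\<rho> ^^ k) (h x))" if x: "x \<in> {1..n}" for k x
  proof (induction k)
    case 0 then show ?case using hih[OF x] by simp
  next
    case (Suc k)
    have m: "(\<rho> ^^ k) (h x) \<in> K" using powK hK[OF x] by blast
    have "(\<pi> ^^ Suc k) x = \<pi> (hi ((\<rho> ^^ k) (h x)))" using Suc by simp
    also have "\<dots> = hi (\<rho> (h (hi ((\<rho> ^^ k) (h x)))))" using hiK[OF m] by (simp add: \<pi>_def)
    also have "\<dots> = hi ((\<rho> ^^ Suc k) (h x))" using hhi[OF m] by simp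
    finally show ?case .
  qed
  define d where "d = perm_order \<pi>"
  have pd: "\<pi> ^^ d = id" using perm_order_props[OF pi24] d_def by blast
  have fixK: "(\<rho> ^^ d) e = e" if e: "e \<in> K" for e
  proof -
    have "hi ((\<rho> ^^ d) (h (hi e))) = hi e" using pipow[OF hiK[OF e], of d] pd by simp
    then have "hi ((\<rho> ^^ d) e) = hi e" using hhi[OF e] by simp
    then have "h (hi ((\<rho> ^^ d) e)) = h (hi e)" by simp
    then show ?thesis using hhi[OF e] hhi[OF powK[OF e]] by simp
  qed
  obtain t where t: "k24 = d * t" using dvd_k24[OF pi24] d_def by (auto elim: dvdE)
  have "((\<rho> ^^ d) ^^ t) e = e" if "e \<in> K" for e
    using that by (induction t) (auto simp: fixK)
  moreover have "c \<in> K" using K_def cls_refl by simp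
  ultimately have "((\<rho> ^^ d) ^^ t) c = c" by blast
  then show ?thesis using t by (simp add: funpow_mult)
qed

section \<open>Ordinal multiplication by a natural number\<close>

lemma omn_Field: "Well_order r \<Longrightarrow> Field (ord_mult_nat r m) = Field r \<times> {..<m}"
proof -
  assume wo: "Well_order r"
  show ?thesis
  proof
    show "Field (ord_mult_nat r m) \<subseteq> Field r \<times> {..<m}"
      unfolding ord_mult_nat_def Field_def by auto
    show "Field r \<times> {..<m} \<subseteq> Field (ord_mult_nat r m)"
    proof
      fix p assume "p \<in> Field r \<times> {..<m}"
      then obtain a i where p: "p = (a, i)" "a \<in> Field r" "i < m" by auto
      then have "(p, p) \<in> ord_mult_nat r m" unfolding ord_mult_nat_def using wo_refl[OF wo] by auto
      then show "p \<in> Field (ord_mult_nat r m)" unfolding Field_def by blast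
    qed
  qed
qed

lemma omn_wo: "Well_order r \<Longrightarrow> Well_order (ord_mult_nat r m)"
proof -
  assume wo: "Well_order r"
  let ?r = "ord_mult_nat r m"
  have F: "Field ?r = Field r \<times> {..<m}" by (rule omn_Field[OF wo])
  have refl: "refl_on (Field ?r) ?r"
    unfolding refl_on_def F by (auto simp: ord_mult_nat_def wo_refl[OF wo])
  have sub: "?r \<subseteq> Field ?r \<times> Field ?r" unfolding Field_def by auto
  have trans: "trans ?r"
    unfolding trans_def ord_mult_nat_def using wo_trans[OF wo] by auto
  have anti: "antisym ?r"
    unfolding antisym_def ord_mult_nat_def using wo_antisym[OF wo] by auto
  have total: "total_on (Field ?r) ?r"
    unfolding total_on_def F using wo_total[OF wo] by (auto simp: ord_mult_nat_def)
  have "?r - Id \<subseteq> inv_image (less_than <*lex*> (r - Id)) (\<lambda>(a, i). (i, a))"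
    unfolding ord_mult_nat_def by auto
  then have wf: "wf (?r - Id)"
    by (rule wf_subset[rotated]) (intro wf_inv_image wf_lex_prod wf_less_than wo_wf[OF wo])
  show ?thesis
    unfolding well_order_on_def linear_order_on_def partial_order_on_def preorder_on_def
    using refl sub trans anti total wf by blast
qed

lemma ev_lim_tail:
  assumes wo': "Well_order r'"
    and ne: "S \<noteq> {}" and im: "e ` S \<subseteq> S'"
    and iso: "\<forall>x\<in>S. \<forall>y\<in>S. (e x, e y) \<in> r' \<longleftrightarrow> (x, y) \<in> r"
    and fin: "\<forall>s\<in>S'. s \<notin> e ` S \<longrightarrow> (\<forall>x\<in>S. (s, e x) \<in> r')"
    and G: "\<forall>x\<in>S. G' (e x) = G x"
  shows "ev_lim r' S' G' d' = ev_lim r S G d"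
proof
  fix c
  have ne': "S' \<noteq> {}" using ne im by blast
  have eq: "evt r' S' (\<lambda>z. G' z c = v) \<longleftrightarrow> evt r S (\<lambda>x. G x c = v)" for v
  proof
    assume "evt r' S' (\<lambda>z. G' z c = v)"
    then obtain z0 where z0: "z0 \<in> S'" "\<forall>z\<in>S'. (z0, z) \<in> r' \<longrightarrow> G' z c = v" unfolding evt_def by blast
    show "evt r S (\<lambda>x. G x c = v)"
    proof (cases "z0 \<in> e ` S")
      case True
      then obtain x0 where x0: "x0 \<in> S" "z0 = e x0" by blast
      show ?thesis unfolding evt_def
        using x0 z0 iso G im by (intro bexI[OF _ x0(1)]) force
    next
      case False
      obtain x0 where x0: "x0 \<in> S" using ne by blast
      show ?thesis unfolding evt_def
        using False z0 fin G im by (intro bexI[OF _ x0(1)]) force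
    qed
  next
    assume "evt r S (\<lambda>x. G x c = v)"
    then obtain x0 where x0: "x0 \<in> S" "\<forall>x\<in>S. (x0, x) \<in> r \<longrightarrow> G x c = v" unfolding evt_def by blast
    show "evt r' S' (\<lambda>z. G' z c = v)" unfolding evt_def
    proof (rule bexI[of _ "e x0"], intro ballI impI)
      show "e x0 \<in> S'" using im x0(1) by blast
      fix z assume z: "z \<in> S'" "(e x0, z) \<in> r'"
      show "G' z c = v"
      proof (cases "z \<in> e ` S")
        case True
        then obtain x where x: "x \<in> S" "z = e x" by blast
        then show ?thesis using iso x0 z G by auto
      next
        case False
        then have "(z, e x0) \<in> r'" using fin z(1) x0(1) by blast
        then have "z = e x0" using z(2) wo_antisym[OF wo'] by blast
        then show ?thesis using False x0(1) by blast
      qed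
    qed
  qed
  show "ev_lim r' S' G' d' c = ev_lim r S G d c"
    unfolding ev_lim_alt using ne ne' eq by simp
qed

context
  fixes r :: "'i rel" and \<sigma> :: "'i \<Rightarrow> 'l cell \<Rightarrow> 'l cell"
  assumes wo: "Well_order r" and bs: "\<forall>\<eta>\<in>Field r. \<sigma> \<eta> \<in> basic_twists"
    and L: "legal (terminal r \<sigma> id_labelling)"
begin

definition \<rho>T :: "'l cell \<Rightarrow> 'l cell" where "\<rho>T c = the (terminal r \<sigma> id_labelling c)"

lemma univ: "terminal r \<sigma> g = (\<lambda>c. g (\<rho>T c))"
  unfolding \<rho>T_def by (rule universal[OF wo bs L])

definition gi :: "('l, 'x) labelling \<Rightarrow> nat \<Rightarrow> ('l, 'x) labelling" where
  "gi g i = (\<lambda>c. g ((\<rho>T ^^ i) c))"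

lemma gi_succ: "0 < i \<Longrightarrow> terminal r \<sigma> (gi g (i - 1)) = gi g i"
proof -
  assume "0 < i"
  then obtain k where k: "i = Suc k" using gr0_implies_Suc by blast
  have "(\<rho>T ^^ Suc k) c = (\<rho>T ^^ k) (\<rho>T c)" for c
    by (simp only: funpow_Suc_right comp_apply)
  then have "(\<lambda>c. gi g (i - 1) (\<rho>T c)) = gi g i"
    unfolding gi_def k by simp
  then show ?thesis using univ[of "gi g (i - 1)"] by simp
qed

lemma underS_omn:
  assumes "a \<in> Field r" "i < m"
  shows "underS (ord_mult_nat r m) (a, i) = (Field r \<times> {..<i}) \<union> ((\<lambda>b. (b, i)) ` underS r a)"
  using assms in_Field1[OF wo] by (auto simp: underS_def ord_mult_nat_def)

lemma concat_term:
  "terminal (ord_mult_nat r m) (\<lambda>(a, i). \<sigma> a) g = gi g m"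
proof -
  define r' where "r' = ord_mult_nat r m"
  define \<tau> where "\<tau> = (\<lambda>(a :: 'i, i :: nat). \<sigma> a)"
  define F' where "F' = (\<lambda>(a, i). runF r \<sigma> (gi g i) a)"
  have wo': "Well_order r'" unfolding r'_def by (rule omn_wo[OF wo])
  have Fr': "Field r' = Field r \<times> {..<m}" unfolding r'_def by (rule omn_Field[OF wo])
  have bs': "\<forall>\<eta>\<in>Field r'. \<tau> \<eta> \<in> basic_twists" using bs unfolding Fr' \<tau>_def by auto
  have G': "act (\<tau> (b, j)) (F' (b, j)) = Gs r \<sigma> (gi g j) b" for b j
    by (rule ext) (simp add: \<tau>_def F'_def Gs_apply[OF wo bs] act_apply)
  have iso: "((x, j), (y, j)) \<in> r' \<longleftrightarrow> (x, y) \<in> r" if "x \<in> Field r" "y \<in> Field r" "j < m" for x y j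
    using that unfolding r'_def ord_mult_nat_def by auto
  have run: "is_run r' \<tau> g F'"
    unfolding is_run_def
  proof
    fix \<eta> assume "\<eta> \<in> Field r'"
    then obtain a i where ai: "\<eta> = (a, i)" "a \<in> Field r" "i < m" unfolding Fr' by auto
    have uS: "underS r' (a, i) = (Field r \<times> {..<i}) \<union> ((\<lambda>b. (b, i)) ` underS r a)"
      unfolding r'_def by (rule underS_omn[OF ai(2,3)])
    show "F' \<eta> = ev_lim r' (underS r' \<eta>) (\<lambda>\<zeta>. act (\<tau> \<zeta>) (F' \<zeta>)) g"
    proof (cases "underS r a = {}")
      case False
      have "ev_lim r' (underS r' (a, i)) (\<lambda>\<zeta>. act (\<tau> \<zeta>) (F' \<zeta>)) g
          = ev_lim r (underS r a) (Gs r \<sigma> (gi g i)) (gi g i)"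
      proof (rule ev_lim_tail[OF wo' False])
        show "(\<lambda>b. (b, i)) ` underS r a \<subseteq> underS r' (a, i)" unfolding uS by blast
        show "\<forall>x\<in>underS r a. \<forall>y\<in>underS r a. (((x, i)), (y, i)) \<in> r' \<longleftrightarrow> (x, y) \<in> r"
          using iso ai(3) underS_sub[OF wo] by blast
        show "\<forall>s\<in>underS r' (a, i). s \<notin> (\<lambda>b. (b, i)) ` underS r a \<longrightarrow> (\<forall>x\<in>underS r a. (s, (x, i)) \<in> r')"
          unfolding uS using ai(3) underS_sub[OF wo] by (auto simp: r'_def ord_mult_nat_def)
        show "\<forall>x\<in>underS r a. act (\<tau> (x, i)) (F' (x, i)) = Gs r \<sigma> (gi g i) x"
          using G' by blast
      qed
      then show ?thesis using ai(1) by (simp add: F'_def runF_eq[OF wo bs])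
    next
      case emp: True
      show ?thesis
      proof (cases "i = 0")
        case True
        have "underS r' (a, i) = {}" unfolding uS using emp True by simp
        then show ?thesis using ai(1) True emp by (simp add: F'_def runF_eq[OF wo bs] gi_def)
      next
        case False
        have "ev_lim r' (underS r' (a, i)) (\<lambda>\<zeta>. act (\<tau> \<zeta>) (F' \<zeta>)) g
            = ev_lim r (Field r) (Gs r \<sigma> (gi g (i - 1))) (gi g (i - 1))"
        proof (rule ev_lim_tail[OF wo'])
          show "Field r \<noteq> {}" using ai(2) by blast
          show "(\<lambda>b. (b, i - 1)) ` Field r \<subseteq> underS r' (a, i)" unfolding uS using False by auto
          show "\<forall>x\<in>Field r. \<forall>y\<in>Field r. (((x, i - 1)), (y, i - 1)) \<in> r' \<longleftrightarrow> (x, y) \<in> r"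
            using iso ai(3) by simp
          show "\<forall>s\<in>underS r' (a, i). s \<notin> (\<lambda>b. (b, i - 1)) ` Field r \<longrightarrow> (\<forall>x\<in>Field r. (s, (x, i - 1)) \<in> r')"
            unfolding uS using ai(3) emp by (auto simp: r'_def ord_mult_nat_def)
          show "\<forall>x\<in>Field r. act (\<tau> (x, i - 1)) (F' (x, i - 1)) = Gs r \<sigma> (gi g (i - 1)) x"
            using G' by blast
        qed
        also have "\<dots> = gi g i" using gi_succ[of i g] False terminal_eq[OF wo bs, of "gi g (i - 1)"] by simp
        finally show ?thesis using ai(1) emp by (simp add: F'_def runF_eq[OF wo bs])
      qed
    qed
  qed
  have T: "terminal r' \<tau> g = ev_lim r' (Field r') (\<lambda>\<zeta>. act (\<tau> \<zeta>) (F' \<zeta>)) g"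
    by (rule terminal_run[OF wo' bs' run])
  show ?thesis
  proof (cases "Field r = {} \<or> m = 0")
    case True
    have e: "Field r' = {}" unfolding Fr' using True by auto
    have "gi g m = g"
    proof (cases "m = 0")
      case True then show ?thesis by (simp add: gi_def)
    next
      case False
      then have "Field r = {}" using \<open>Field r = {} \<or> m = 0\<close> by blast
      then have "\<rho>T = (\<lambda>c. c)" unfolding \<rho>T_def using terminal_eq[OF wo bs, of id_labelling]
        by (simp add: id_labelling_def)
      then show ?thesis by (simp add: gi_def id_def[symmetric])
    qed
    then show ?thesis using T e unfolding r'_def \<tau>_def by simp
  next
    case False
    then have ne: "Field r \<noteq> {}" and m: "0 < m" by auto
    have "ev_lim r' (Field r') (\<lambda>\<zeta>. act (\<tau> \<zeta>) (F' \<zeta>)) g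
        = ev_lim r (Field r) (Gs r \<sigma> (gi g (m - 1))) (gi g (m - 1))"
    proof (rule ev_lim_tail[OF wo' ne])
      show "(\<lambda>b. (b, m - 1)) ` Field r \<subseteq> Field r'" unfolding Fr' using m by auto
      show "\<forall>x\<in>Field r. \<forall>y\<in>Field r. (((x, m - 1)), (y, m - 1)) \<in> r' \<longleftrightarrow> (x, y) \<in> r"
        using iso m by simp
      show "\<forall>s\<in>Field r'. s \<notin> (\<lambda>b. (b, m - 1)) ` Field r \<longrightarrow> (\<forall>x\<in>Field r. (s, (x, m - 1)) \<in> r')"
        unfolding Fr' using m by (auto simp: r'_def ord_mult_nat_def)
      show "\<forall>x\<in>Field r. act (\<tau> (x, m - 1)) (F' (x, m - 1)) = Gs r \<sigma> (gi g (m - 1)) x"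
        using G' by blast
    qed
    also have "\<dots> = gi g m" using gi_succ[of m g] m terminal_eq[OF wo bs, of "gi g (m - 1)"] by simp
    finally show ?thesis using T unfolding r'_def \<tau>_def by simp
  qed
qed

end

theorem theorem4p3:
  fixes r :: "'i rel" and \<sigma> :: "'i \<Rightarrow> 'l cell \<Rightarrow> 'l cell"
  assumes L_inf: "infinite (UNIV :: 'l set)"
    and bs: "basic_seq r \<sigma>"
  shows "(convergent_over r \<sigma> f_solved \<longleftrightarrow> universally_convergent r \<sigma>)
    \<and> (convergent_over r \<sigma> f_solved \<longrightarrow>
         (\<exists>(r' :: ('i \<times> nat) rel) \<tau>. basic_seq r' \<tau>
            \<and> (r', ord_mult_nat r (k24 - 1)) \<in> ordLeq
            \<and> terminal r' \<tau> (terminal r \<sigma> f_solved) = f_solved))"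
proof -
  have wo: "Well_order r" and bsf: "\<forall>\<eta>\<in>Field r. \<sigma> \<eta> \<in> basic_twists"
    using bs unfolding basic_seq_def by auto
  have p1: "convergent_over r \<sigma> f_solved \<longleftrightarrow> universally_convergent r \<sigma>"
    unfolding convergent_over_def universally_convergent_def
    using part1_fwd[OF wo bsf] part1_bwd[OF wo bsf] by blast
  have p2: "\<exists>(r' :: ('i \<times> nat) rel) \<tau>. basic_seq r' \<tau>
            \<and> (r', ord_mult_nat r (k24 - 1)) \<in> ordLeq
            \<and> terminal r' \<tau> (terminal r \<sigma> f_solved) = f_solved"
    if conv: "convergent_over r \<sigma> f_solved"
  proof -
    have Ls: "legal (terminal r \<sigma> f_solved)" using conv unfolding convergent_over_def .
    have L: "legal (terminal r \<sigma> id_labelling)" by (rule part1_fwd[OF wo bsf Ls])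
    have all: "\<forall>\<zeta>\<in>Field r. legal (runF r \<sigma> id_labelling \<zeta>)" using legal_all[OF wo bsf L] by blast
    have gd: "good (\<rho>T r \<sigma>)"
      using Q_term[OF wo bsf all L] unfolding \<rho>T_def[OF wo bsf L] by simp
    have ord: "((\<rho>T r \<sigma>) ^^ k24) c = c" for c
      using class_order gd unfolding good_def by blast
    define r' where "r' = ord_mult_nat r (k24 - 1)"
    define \<tau> where "\<tau> = (\<lambda>(a :: 'i, i :: nat). \<sigma> a)"
    have wo': "Well_order r'" unfolding r'_def by (rule omn_wo[OF wo])
    have bs': "basic_seq r' \<tau>"
      unfolding basic_seq_def using wo' bsf omn_Field[OF wo] unfolding r'_def \<tau>_def by auto
    have le: "(r', ord_mult_nat r (k24 - 1)) \<in> ordLeq" using ordLeq_reflexive[OF wo'] r'_def by simp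
    have t1: "terminal r \<sigma> f_solved = (\<lambda>c. f_solved (\<rho>T r \<sigma> c))" by (rule univ[OF wo bsf L])
    have "terminal r' \<tau> (terminal r \<sigma> f_solved) = gi r \<sigma> (terminal r \<sigma> f_solved) (k24 - 1)"
      unfolding r'_def \<tau>_def by (rule concat_term[OF wo bsf L])
    also have "\<dots> = (\<lambda>c. f_solved (\<rho>T r \<sigma> (((\<rho>T r \<sigma>) ^^ (k24 - 1)) c)))"
      unfolding gi_def[OF wo bsf L] t1 by simp
    also have "\<dots> = (\<lambda>c. f_solved (((\<rho>T r \<sigma>) ^^ k24) c))"
    proof -
      have "Suc (k24 - 1) = k24" using k24_pos by simp
      then have "\<rho>T r \<sigma> (((\<rho>T r \<sigma>) ^^ (k24 - 1)) c) = ((\<rho>T r \<sigma>) ^^ k24) c" for c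
        by (metis comp_apply funpow.simps(2))
      then show ?thesis by simp
    qed
    also have "\<dots> = f_solved" using ord by simp
    finally show ?thesis using bs' le by blast
  qed
  show ?thesis using p1 p2 by blast
qed

end
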